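(* Under the hypotheses in the context, the cohomology spaces of the differential algebra $(\mathcal A(\mathbf{CPE}),\{D_t,D_1,\dots,D_m\})$ are $$H^q_{\mathrm E}(\mathbf{CPE})\cong\begin{cases}0,& q<0,\ 1\le q\le m-2,\ q>m+1;\\ \mathbb R,& q=0;\\ \ker D_t^{m-1},& q=m-1;\\ H^m_{\mathrm H}(\mathbf{CPE})/\operatorname{im}D_t^m,& q=m+1,\end{cases}$$ and in degree $q=m$, $H^m_{\mathrm E}(\mathbf{CPE})/\operatorname{im}\big(H^{m-1}_{\mathrm H}(\mathbf{CPE})\big)\cong\ker D_t^m$, where the map $H^{m-1}_{\mathrm H}(\mathbf{CPE})\to H^m_{\mathrm E}(\mathbf{CPE})$ is induced by $\omega\mapsto(-1)^{m-1}dt\wedge\omega$.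
   Context: Fix an integer $m\ge 2$, $M=\{1,\dots,m\}$, $N=\{2,\dots,m\}$; indices $\lambda,\mu$ in $M$, $\alpha,\beta$ in $N$; repeated upper/lower indices are summed. $\mathbb I=\mathbb Z_+^m$ is the set of multi-indices $\mathrm i$; $\mathrm i+(\mu)$ increases the $\mu$-th entry by $1$, $(\mu)=0+(\mu)$, $2(\mu)=(\mu)+(\mu)$; $\mathbb I_0=\{\mathrm i:i^1=0\}$, $\mathbb I_1=\{\mathrm i:i^1\in\{0,1\}\}$. $\mathcal A(\mathbf{CPE})$ is the algebra of smooth real functions of finitely many of the variables $t\in\mathbb R$, $x^\mu$, $u^1_{\mathrm i}$ ($\mathrm i\in\mathbb I_0$), $u^\alpha_{\mathrm i}$ ($\mathrm i\in\mathbb I$), $p_{\mathrm i}$ ($\mathrm i\in\mathbb I_1$). It carries commuting derivations $D_\mu=\partial_{x^\mu}+u^1_{\mathrm i_0+(\mu)}\partial_{u^1_{\mathrm i_0}}+u^\alpha_{\mathrm i+(\mu)}\partial_{u^\alpha_{\mathrm i}}+p_{\mathrm i_1+(\mu)}\partial_{p_{\mathrm i_1}}$ (sums over $\mathrm i_0\in\mathbb I_0$, $\mathrm i\in\mathbb I$, $\mathrm i_1\in\mathbb I_1$), where the variables not in the list are expressed recursively by $u^1_{\mathrm k}=-u^\beta_{\mathrm k-(1)+(\beta)}$ ($k^1\ge1$) and $p_{\mathrm k}=-D_{\mathrm k-2(1)}\Phi$ ($k^1\ge2$), $\Phi=\sum_\alpha p_{2(\alpha)}+u^\lambda_{(\mu)}u^\mu_{(\lambda)}$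 with $u^1_{(1)}$ replaced by $-u^\alpha_{(\alpha)}$ (this is the quotient of the algebra of finite-order functions of $t,x^\mu,u^\mu_{\mathrm i},p_{\mathrm i}$ by the differential ideal generated by $u^\mu_{(\mu)}$ and $\Delta p+u^\lambda_{(\mu)}u^\mu_{(\lambda)}$, $\Delta=\sum_\mu D_\mu^2$). $D_{\mathrm i}=D_1^{i^1}\cdots D_m^{i^m}$. Let $\mathrm E=(E^1,\dots,E^m,E)\in\mathcal A(\mathbf{CPE})^{m+1}$ satisfy $D_\mu E^\mu=0$ and $\Delta E+2u^\lambda_{(\mu)}D_\lambda E^\mu=0$ (with $u^1_{(1)}=-u^\alpha_{(\alpha)}$), let $\mathrm{ev}_{\mathrm E}=D_{\mathrm i_0}E^1\,\partial_{u^1_{\mathrm i_0}}+D_{\mathrm i}E^\alpha\,\partial_{u^\alpha_{\mathrm i}}+D_{\mathrm i_1}E\,\partial_{p_{\mathrm i_1}}$, assumed to commute with all $D_\mu$, and let $D_t=\partial_t+\mathrm{ev}_{\mathrm E}$, so $[D_t,D_\mu]=0$. Horizontal forms $\Omega^q_{\mathrm H}$: $q$-forms in $dx^\mu$ with skew-symmetric coefficients in $\mathcal A(\mathbf{CPE})$ ($0\le q\le m$, zero otherwise), $d_{\mathrm H}=dx^\mu\wedge D_\mu$ (acting on coefficients), $H^q_{\mathrm H}(\mathbf{CPE})=\ker d_{\mathrm H}/\operatorname{im}d_{\mathrm H}$. Evolution forms: $\Omega^q_{\mathrm E}=dt\wedge\Omega^{q-1}_{\mathrm H}\oplus\Omega^q_{\mathrm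 H}$ with $d_{\mathrm E}(dt\wedge\omega^{q-1}+\omega^q)=dt\wedge(D_t\omega^q-d_{\mathrm H}\omega^{q-1})+d_{\mathrm H}\omega^q$ ($D_t$ acting coefficientwise), and $H^q_{\mathrm E}(\mathbf{CPE})=\ker d_{\mathrm E}/\operatorname{im}d_{\mathrm E}$ in degree $q$. $D_t$ acting coefficientwise commutes with $d_{\mathrm H}$ and induces $D^q_t:H^q_{\mathrm H}(\mathbf{CPE})\to H^q_{\mathrm H}(\mathbf{CPE})$. Standing fact used in the statement: $H^q_{\mathrm H}(\mathbf{CPE})=0$ for $1\le q\le m-2$, and $H^0_{\mathrm H}(\mathbf{CPE})$ consists of the smooth functions of $t$ alone. *)

theory Defs
  imports "HOL-Analysis.Analysis" "HOL-Library.Function_Algebras"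
begin

type_synonym mindex = "nat \<Rightarrow> nat"

definition MI :: "nat \<Rightarrow> mindex set" where
  "MI m = {i. \<forall>j. j \<notin> {1..m} \<longrightarrow> i j = 0}"

definition inc :: "mindex \<Rightarrow> nat \<Rightarrow> mindex" where
  "inc i \<mu> = i(\<mu> := Suc (i \<mu>))"

definition unit_mi :: "nat \<Rightarrow> mindex" where
  "unit_mi \<mu> = inc (\<lambda>_. 0) \<mu>"

datatype var = T | X nat | U nat mindex | P mindex

definition vars :: "nat \<Rightarrow> var set" where
  "vars m = {T} \<union> {X \<mu> | \<mu>. \<mu> \<in> {1..m}}
     \<union> {U 1 i | i. i \<in> MI m \<and> i 1 = 0}
     \<union> {U \<alpha> i | \<alpha> i. \<alpha> \<in> {2..m} \<and> i \<in> MI m}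
     \<union> {P i | i. i \<in> MI m \<and> i 1 \<le> 1}"

type_synonym pt = "var \<Rightarrow> real"
type_synonym fn = "pt \<Rightarrow> real"

definition depends_only :: "fn \<Rightarrow> var set \<Rightarrow> bool" where
  "depends_only f S \<longleftrightarrow> (\<forall>a b. (\<forall>v\<in>S. a v = b v) \<longrightarrow> f a = f b)"

definition dep :: "fn \<Rightarrow> var set" where
  "dep f = {v. \<exists>a s. f (a(v := s)) \<noteq> f a}"

definition pd :: "var \<Rightarrow> fn \<Rightarrow> fn" where
  "pd v f = (\<lambda>a. deriv (\<lambda>s. f (a(v := s))) (a v))"

definition iter_pd :: "var list \<Rightarrow> fn \<Rightarrow> fn" where
  "iter_pd vs f = foldr pd vs f"

definition smooth :: "fn \<Rightarrow> bool" where
  "smooth f \<longleftrightarrow> (\<forall>vs. continuous_on UNIV (iter_pd vs f)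
      \<and> (\<forall>v a. (\<lambda>s. iter_pd vs f (a(v := s))) differentiable (at (a v))))"

definition Alg :: "nat \<Rightarrow> fn set" where
  "Alg m = {f. (\<exists>S. finite S \<and> S \<subseteq> vars m \<and> depends_only f S) \<and> smooth f}"

definition Dgen :: "(var \<Rightarrow> fn) \<Rightarrow> fn \<Rightarrow> fn" where
  "Dgen c f = (\<lambda>a. \<Sum>v\<in>dep f. c v a * pd v f a)"

definition coefA :: "nat \<Rightarrow> var \<Rightarrow> fn" where
  "coefA \<alpha> v = (case v of
      T \<Rightarrow> (\<lambda>_. 0)
    | X \<nu> \<Rightarrow> (\<lambda>_. if \<nu> = \<alpha> then 1 else 0)
    | U \<beta> i \<Rightarrow> (\<lambda>a. a (U \<beta> (inc i \<alpha>)))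
    | P i \<Rightarrow> (\<lambda>a. a (P (inc i \<alpha>))))"

definition Dalpha :: "nat \<Rightarrow> fn \<Rightarrow> fn" where
  "Dalpha \<alpha> = Dgen (coefA \<alpha>)"

definition DN :: "nat \<Rightarrow> mindex \<Rightarrow> fn \<Rightarrow> fn" where
  "DN m j f = foldr (\<lambda>\<alpha> g. (Dalpha \<alpha> ^^ j \<alpha>) g) [2..<m+1] f"

definition uval :: "nat \<Rightarrow> nat \<Rightarrow> nat \<Rightarrow> fn" where
  "uval m l \<mu> = (\<lambda>a. if l = 1 \<and> \<mu> = 1
       then - (\<Sum>\<alpha>\<in>{2..m}. a (U \<alpha> (unit_mi \<alpha>)))
       else a (U l (unit_mi \<mu>)))"

definition Phi :: "nat \<Rightarrow> fn" where
  "Phi m = (\<lambda>a. (\<Sum>\<alpha>\<in>{2..m}. a (P (inc (unit_mi \<alpha>) \<alpha>)))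
       + (\<Sum>l\<in>{1..m}. \<Sum>\<mu>\<in>{1..m}. uval m l \<mu> a * uval m \<mu> l a))"

text \<open>Coefficients of D_1, using u^1_k = -u^beta_{k-(1)+(beta)} and p_k = -D_{k-2(1)} Phi.\<close>
definition coef1 :: "nat \<Rightarrow> var \<Rightarrow> fn" where
  "coef1 m v = (case v of
      T \<Rightarrow> (\<lambda>_. 0)
    | X \<nu> \<Rightarrow> (\<lambda>_. if \<nu> = 1 then 1 else 0)
    | U \<beta> i \<Rightarrow> (if \<beta> = 1 then (\<lambda>a. - (\<Sum>\<gamma>\<in>{2..m}. a (U \<gamma> (inc i \<gamma>))))
                else (\<lambda>a. a (U \<beta> (inc i 1))))
    | P i \<Rightarrow> (if i 1 = 0 then (\<lambda>a. a (P (inc i 1)))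
              else (\<lambda>a. - DN m (i(1 := 0)) (Phi m) a)))"

definition D :: "nat \<Rightarrow> nat \<Rightarrow> fn \<Rightarrow> fn" where
  "D m \<mu> = (if \<mu> = 1 then Dgen (coef1 m) else Dgen (coefA \<mu>))"

definition Dmulti :: "nat \<Rightarrow> mindex \<Rightarrow> fn \<Rightarrow> fn" where
  "Dmulti m i f = foldr (\<lambda>\<mu> g. (D m \<mu> ^^ i \<mu>) g) [1..<m+1] f"

definition Lap :: "nat \<Rightarrow> fn \<Rightarrow> fn" where
  "Lap m f = (\<lambda>a. \<Sum>\<mu>\<in>{1..m}. D m \<mu> (D m \<mu> f) a)"

text \<open>E : components E^1..E^m (as E 1, ..., E m) and Ep = E (the p-component).\<close>
definition evcoef :: "nat \<Rightarrow> (nat \<Rightarrow> fn) \<Rightarrow> fn \<Rightarrow> var \<Rightarrow> fn" where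
  "evcoef m E Ep v = (case v of
      T \<Rightarrow> (\<lambda>_. 0)
    | X \<nu> \<Rightarrow> (\<lambda>_. 0)
    | U \<beta> i \<Rightarrow> Dmulti m i (E \<beta>)
    | P i \<Rightarrow> Dmulti m i Ep)"

definition ev :: "nat \<Rightarrow> (nat \<Rightarrow> fn) \<Rightarrow> fn \<Rightarrow> fn \<Rightarrow> fn" where
  "ev m E Ep = Dgen (evcoef m E Ep)"

definition Dt :: "nat \<Rightarrow> (nat \<Rightarrow> fn) \<Rightarrow> fn \<Rightarrow> fn \<Rightarrow> fn" where
  "Dt m E Ep f = (\<lambda>a. pd T f a + ev m E Ep f a)"

text \<open>A form assigns to each set J = {j1<...<jq} of indices the coefficient of dx^{j1}/\...dx^{jq}.\<close>
type_synonym form = "nat set \<Rightarrow> fn"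

definition Hform :: "nat \<Rightarrow> int \<Rightarrow> form set" where
  "Hform m q = {\<omega>. (\<forall>J. \<omega> J \<in> Alg m)
      \<and> (\<forall>J. \<not> (J \<subseteq> {1..m} \<and> int (card J) = q) \<longrightarrow> \<omega> J = (\<lambda>_. 0))}"

definition dH :: "nat \<Rightarrow> form \<Rightarrow> form" where
  "dH m \<omega> = (\<lambda>J a. if J \<subseteq> {1..m}
      then (\<Sum>\<mu>\<in>J. (-1) ^ card {\<nu>\<in>J. \<nu> < \<mu>} * D m \<mu> (\<omega> (J - {\<mu>})) a)
      else 0)"

definition DtF :: "nat \<Rightarrow> (nat \<Rightarrow> fn) \<Rightarrow> fn \<Rightarrow> form \<Rightarrow> form" where
  "DtF m E Ep \<omega> = (\<lambda>J. Dt m E Ep (\<omega> J))"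

definition zform :: form where "zform = (\<lambda>_ _. 0)"

definition ZH :: "nat \<Rightarrow> int \<Rightarrow> form set" where
  "ZH m q = {\<omega> \<in> Hform m q. dH m \<omega> = zform}"

definition BH :: "nat \<Rightarrow> int \<Rightarrow> form set" where
  "BH m q = dH m ` Hform m (q - 1)"

section \<open>Evolution forms: (theta, omega) stands for dt /\ theta + omega\<close>

definition Eform :: "nat \<Rightarrow> int \<Rightarrow> (form \<times> form) set" where
  "Eform m q = {(\<theta>, \<omega>). \<theta> \<in> Hform m (q - 1) \<and> \<omega> \<in> Hform m q}"

definition dE :: "nat \<Rightarrow> (nat \<Rightarrow> fn) \<Rightarrow> fn \<Rightarrow> form \<times> form \<Rightarrow> form \<times> form" where
  "dE m E Ep x = (case x of (\<theta>, \<omega>) \<Rightarrow>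
      ((\<lambda>J a. DtF m E Ep \<omega> J a - dH m \<theta> J a), dH m \<omega>))"

definition ZE :: "nat \<Rightarrow> (nat \<Rightarrow> fn) \<Rightarrow> fn \<Rightarrow> int \<Rightarrow> (form \<times> form) set" where
  "ZE m E Ep q = {x \<in> Eform m q. dE m E Ep x = (zform, zform)}"

definition BE :: "nat \<Rightarrow> (nat \<Rightarrow> fn) \<Rightarrow> fn \<Rightarrow> int \<Rightarrow> (form \<times> form) set" where
  "BE m E Ep q = dE m E Ep ` Eform m (q - 1)"

definition sc_form :: "real \<Rightarrow> form \<Rightarrow> form" where
  "sc_form c \<omega> = (\<lambda>J a. c * \<omega> J a)"

definition sc_pair :: "real \<Rightarrow> form \<times> form \<Rightarrow> form \<times> form" where
  "sc_pair c x = (sc_form c (fst x), sc_form c (snd x))"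

text \<open>Z/B is isomorphic to Z'/B' (B, B' subspaces of Z, Z'): there is a linear
  map Z -> Z' inducing a bijection Z/B -> Z'/B'.\<close>
definition sq_iso :: "'a::ab_group_add set \<Rightarrow> 'a set \<Rightarrow> (real \<Rightarrow> 'a \<Rightarrow> 'a)
    \<Rightarrow> 'b::ab_group_add set \<Rightarrow> 'b set \<Rightarrow> (real \<Rightarrow> 'b \<Rightarrow> 'b) \<Rightarrow> bool" where
  "sq_iso Z B sa Z' B' sb \<longleftrightarrow> (\<exists>\<phi>.
      (\<forall>x\<in>Z. \<forall>y\<in>Z. \<phi> (x + y) = \<phi> x + \<phi> y)
    \<and> (\<forall>c. \<forall>x\<in>Z. \<phi> (sa c x) = sb c (\<phi> x))
    \<and> \<phi> ` Z \<subseteq> Z'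
    \<and> (\<forall>z'\<in>Z'. \<exists>z\<in>Z. z' - \<phi> z \<in> B')
    \<and> (\<forall>z\<in>Z. \<phi> z \<in> B' \<longleftrightarrow> z \<in> B))"

text \<open>ker D_t^q as a subquotient of H^q_H: classes of closed q-forms omega with D_t omega exact.\<close>
definition KerDt :: "nat \<Rightarrow> (nat \<Rightarrow> fn) \<Rightarrow> fn \<Rightarrow> int \<Rightarrow> form set" where
  "KerDt m E Ep q = {\<omega> \<in> ZH m q. DtF m E Ep \<omega> \<in> BH m q}"

end

theory Submission
  imports Defs
begin


definition pdiff :: "fn \<Rightarrow> bool" where
  "pdiff f \<longleftrightarrow> (\<forall>v a. (\<lambda>s. f (a(v := s))) differentiable (at (a v)))"

lemma iter_pd_snoc: "iter_pd (vs @ [v]) f = iter_pd vs (pd v f)"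
  by (simp add: iter_pd_def)

lemma iter_pd_Cons: "iter_pd (v # vs) f = pd v (iter_pd vs f)"
  by (simp add: iter_pd_def)

lemma iter_pd_Nil: "iter_pd [] f = f"
  by (simp add: iter_pd_def)

lemma smooth_iff: "smooth f \<longleftrightarrow> continuous_on UNIV f \<and> pdiff f \<and> (\<forall>v. smooth (pd v f))"
proof
  assume s: "smooth f"
  show "continuous_on UNIV f \<and> pdiff f \<and> (\<forall>v. smooth (pd v f))"
  proof (intro conjI allI)
    show "continuous_on UNIV f" using s[unfolded smooth_def, rule_format, of "[]"] by (simp add: iter_pd_Nil)
    show "pdiff f" using s[unfolded smooth_def, rule_format, of "[]"] by (simp add: iter_pd_Nil pdiff_def)
    fix v show "smooth (pd v f)"
      using s unfolding smooth_def by (metis iter_pd_snoc)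
  qed
next
  assume h: "continuous_on UNIV f \<and> pdiff f \<and> (\<forall>v. smooth (pd v f))"
  show "smooth f" unfolding smooth_def
  proof
    fix vs :: "var list"
    show "continuous_on UNIV (iter_pd vs f) \<and> (\<forall>v a. (\<lambda>s. iter_pd vs f (a(v := s))) differentiable at (a v))"
    proof (cases vs rule: rev_cases)
      case Nil then show ?thesis using h by (simp add: iter_pd_Nil pdiff_def)
    next
      case (snoc ys y)
      then show ?thesis using h unfolding smooth_def by (simp add: iter_pd_snoc)
    qed
  qed
qed

lemma smooth_coinduct:
  assumes XS: "\<And>f. f \<in> XS \<Longrightarrow> continuous_on UNIV f \<and> pdiff f \<and> (\<forall>v. pd v f \<in> XS)"
    and f: "f \<in> XS"
  shows "smooth f"
proof -
  have "iter_pd vs f \<in> XS" for vs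
    by (induction vs) (use f XS in \<open>auto simp: iter_pd_Cons iter_pd_Nil\<close>)
  then show ?thesis unfolding smooth_def using XS unfolding pdiff_def by blast
qed

lemma smooth_cont: "smooth f \<Longrightarrow> continuous_on UNIV f"
  using smooth_iff by blast

lemma smooth_pd: "smooth f \<Longrightarrow> smooth (pd v f)"
  using smooth_iff by blast

lemma smooth_DERIV:
  assumes "smooth f"
  shows "((\<lambda>s. f (a(v := s))) has_real_derivative pd v f a) (at (a v))"
proof -
  have "(\<lambda>s. f (a(v := s))) differentiable (at (a v))"
    using assms smooth_iff pdiff_def by blast
  then show ?thesis unfolding pd_def using DERIV_deriv_iff_real_differentiable by blast
qed

lemma smooth_DERIV':
  assumes "smooth f"
  shows "((\<lambda>s. f (a(v := s))) has_real_derivative pd v f (a(v := s0))) (at s0)"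
  using smooth_DERIV[OF assms, of "a(v := s0)" v] by simp

lemma pd_eqI:
  assumes "\<And>a. ((\<lambda>s. f (a(v := s))) has_real_derivative g a) (at (a v))"
  shows "pd v f = g"
  unfolding pd_def using assms DERIV_imp_deriv by (intro ext) blast

lemma pdiffI:
  assumes "\<And>v a. ((\<lambda>s. f (a(v := s))) has_real_derivative g v a) (at (a v))"
  shows "pdiff f"
  unfolding pdiff_def using assms real_differentiable_def by blast

definition spl :: "(fn \<times> fn) list \<Rightarrow> fn" where
  "spl L = (\<lambda>a. sum_list (map (\<lambda>p. fst p a * snd p a) L))"

definition dspl :: "var \<Rightarrow> (fn \<times> fn) list \<Rightarrow> (fn \<times> fn) list" where
  "dspl v L = concat (map (\<lambda>p. [(pd v (fst p), snd p), (fst p, pd v (snd p))]) L)"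

lemma spl_cont:
  assumes "\<forall>p\<in>set L. smooth (fst p) \<and> smooth (snd p)"
  shows "continuous_on UNIV (spl L)"
  using assms
proof (induction L)
  case Nil then show ?case by (simp add: spl_def)
next
  case (Cons p L)
  have "continuous_on UNIV (spl L)" using Cons by auto
  moreover have "continuous_on UNIV (fst p)" "continuous_on UNIV (snd p)"
    using Cons.prems by (auto intro: smooth_cont)
  ultimately have "continuous_on UNIV (\<lambda>a. fst p a * snd p a + spl L a)"
    by (intro continuous_on_add continuous_on_mult)
  then show ?case by (simp add: spl_def)
qed

lemma spl_DERIV:
  assumes "\<forall>p\<in>set L. smooth (fst p) \<and> smooth (snd p)"
  shows "((\<lambda>s. spl L (a(v := s))) has_real_derivative spl (dspl v L) a) (at (a v))"
  using assms
proof (induction L)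
  case Nil then show ?case by (simp add: spl_def dspl_def)
next
  case (Cons p L)
  have d1: "((\<lambda>s. fst p (a(v := s))) has_real_derivative pd v (fst p) a) (at (a v))"
    using Cons.prems by (intro smooth_DERIV) auto
  have d2: "((\<lambda>s. snd p (a(v := s))) has_real_derivative pd v (snd p) a) (at (a v))"
    using Cons.prems by (intro smooth_DERIV) auto
  have d3: "((\<lambda>s. spl L (a(v := s))) has_real_derivative spl (dspl v L) a) (at (a v))"
    using Cons.prems by (intro Cons.IH) auto
  have d: "((\<lambda>s. fst p (a(v := s)) * snd p (a(v := s)) + spl L (a(v := s))) has_real_derivative
      (pd v (fst p) a * snd p (a(v := a v)) + pd v (snd p) a * fst p (a(v := a v))) + spl (dspl v L) a) (at (a v))"
    by (intro DERIV_add DERIV_mult d1 d2 d3)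
  have e1: "(\<lambda>s. spl (p # L) (a(v := s))) = (\<lambda>s. fst p (a(v := s)) * snd p (a(v := s)) + spl L (a(v := s)))"
    by (simp add: spl_def)
  have e2: "spl (dspl v (p # L)) a = (pd v (fst p) a * snd p (a(v := a v)) + pd v (snd p) a * fst p (a(v := a v))) + spl (dspl v L) a"
    by (simp add: spl_def dspl_def algebra_simps)
  show ?case unfolding e1 e2 by (rule d)
qed

lemma spl_smooth:
  assumes "\<forall>p\<in>set L. smooth (fst p) \<and> smooth (snd p)"
  shows "smooth (spl L)"
proof (rule smooth_coinduct[where XS="{spl L | L. \<forall>p\<in>set L. smooth (fst p) \<and> smooth (snd p)}"])
  fix f assume "f \<in> {spl L | L. \<forall>p\<in>set L. smooth (fst p) \<and> smooth (snd p)}"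
  then obtain L where f: "f = spl L" and L: "\<forall>p\<in>set L. smooth (fst p) \<and> smooth (snd p)" by blast
  have "pd v f = spl (dspl v L)" for v
    unfolding f by (rule pd_eqI, rule spl_DERIV[OF L])
  moreover have "\<forall>p\<in>set (dspl v L). smooth (fst p) \<and> smooth (snd p)" for v
    using L by (auto simp: dspl_def intro: smooth_pd)
  ultimately show "continuous_on UNIV f \<and> pdiff f \<and> (\<forall>v. pd v f \<in> {spl L | L. \<forall>p\<in>set L. smooth (fst p) \<and> smooth (snd p)})"
    using spl_cont[OF L] spl_DERIV[OF L] f by (auto intro!: pdiffI)
qed (use assms in blast)

lemma pd_const: "pd v (\<lambda>_. c) = (\<lambda>_. 0)"
  by (rule pd_eqI) simp

lemma smooth_const: "smooth (\<lambda>_. c)"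
proof (rule smooth_coinduct[where XS="range (\<lambda>c. \<lambda>_. c)"])
  fix f :: fn assume "f \<in> range (\<lambda>c. \<lambda>_. c)"
  then obtain d where f: "f = (\<lambda>_. d)" by blast
  have "pdiff (\<lambda>_. d)" by (rule pdiffI[where g="\<lambda>_ _. 0"]) (rule DERIV_const)
  moreover have "continuous_on UNIV (\<lambda>_::pt. d)" by (rule continuous_on_const)
  moreover have "pd v (\<lambda>_. d) \<in> range (\<lambda>c. \<lambda>_. c)" for v
    unfolding pd_const by (rule rangeI)
  ultimately show "continuous_on UNIV f \<and> pdiff f \<and> (\<forall>v. pd v f \<in> range (\<lambda>c. \<lambda>_. c))"
    unfolding f by blast
next
  show "(\<lambda>_. c) \<in> range (\<lambda>c. \<lambda>_. c)" by (rule rangeI)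
qed

lemma smooth_mult: "smooth f \<Longrightarrow> smooth g \<Longrightarrow> smooth (\<lambda>a. f a * g a)"
  using spl_smooth[of "[(f, g)]"] by (simp add: spl_def)

lemma smooth_add: "smooth f \<Longrightarrow> smooth g \<Longrightarrow> smooth (\<lambda>a. f a + g a)"
  using spl_smooth[of "[(f, \<lambda>_. 1), (g, \<lambda>_. 1)]"] smooth_const by (simp add: spl_def)

lemma smooth_cmult: "smooth f \<Longrightarrow> smooth (\<lambda>a. c * f a)"
  using smooth_mult[OF smooth_const] .

lemma smooth_uminus: "smooth f \<Longrightarrow> smooth (\<lambda>a. - f a)"
  using smooth_cmult[of f "-1"] by simp

lemma smooth_diff: "smooth f \<Longrightarrow> smooth g \<Longrightarrow> smooth (\<lambda>a. f a - g a)"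
  using smooth_add[OF _ smooth_uminus] by simp

lemma smooth_sum: "finite I \<Longrightarrow> (\<And>i. i \<in> I \<Longrightarrow> smooth (f i)) \<Longrightarrow> smooth (\<lambda>a. \<Sum>i\<in>I. f i a)"
  by (induction I rule: finite_induct) (auto intro: smooth_const smooth_add)

lemma pd_coord: "pd v (\<lambda>a. a w) = (\<lambda>_. if v = w then 1 else 0)"
  by (rule pd_eqI) (auto intro: derivative_eq_intros)

lemma smooth_coord: "smooth (\<lambda>a. a w)"
proof -
  have "pd v (\<lambda>a. a w) = (\<lambda>_. if v = w then 1 else 0)" for v by (rule pd_coord)
  then have "smooth (pd v (\<lambda>a. a w))" for v by (simp add: smooth_const)
  moreover have "pdiff (\<lambda>a. a w)"
    by (rule pdiffI[where g="\<lambda>v _. if v = w then 1 else 0"]) (auto intro: derivative_eq_intros)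
  ultimately show ?thesis by (subst smooth_iff) simp
qed


lemma cont_plane:
  assumes "continuous_on UNIV F"
  shows "continuous_on UNIV (\<lambda>z::real\<times>real. F (a(u := fst z, v := snd z)))"
proof -
  have "continuous_on UNIV (\<lambda>z::real\<times>real. a(u := fst z, v := snd z))"
  proof (rule continuous_on_coordinatewise_then_product)
    fix w
    show "continuous_on UNIV (\<lambda>z::real\<times>real. (a(u := fst z, v := snd z)) w)"
      by (cases "w = v"; cases "w = u") (auto intro: continuous_intros)
  qed
  then show ?thesis using continuous_on_compose2[OF assms] by auto
qed

lemma cont_line:
  assumes "continuous_on UNIV F"
  shows "continuous_on S (\<lambda>r::real. F (a(v := r)))"
proof -
  have "continuous_on UNIV (\<lambda>r::real. a(v := r))"
  proof (rule continuous_on_coordinatewise_then_product)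
    fix w
    show "continuous_on UNIV (\<lambda>r::real. (a(v := r)) w)"
      by (cases "w = v") (auto intro: continuous_intros)
  qed
  then have "continuous_on UNIV (\<lambda>r::real. F (a(v := r)))" using continuous_on_compose2[OF assms] by auto
  then show ?thesis by (rule continuous_on_subset) simp
qed

lemma schwarz_pt:
  assumes f: "smooth f" and uv: "u \<noteq> v"
  shows "pd v (pd u f) a = pd u (pd v f) a"
proof -
  define P where "P s r = a(u := s, v := r)" for s r
  define F1 where "F1 = pd v f"
  define F2 where "F2 = pd u f"
  define G where "G = pd u F1"
  have sF1: "smooth F1" and sF2: "smooth F2" and sG: "smooth G"
    using f by (auto simp: F1_def F2_def G_def intro: smooth_pd)
  have Pu: "(P s r)(u := s') = P s' r" for s r s' using uv by (simp add: P_def fun_upd_twist)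
  have Pv: "(P s r)(v := r') = P s r'" for s r r' by (simp add: P_def)
  have d1: "((\<lambda>r'. f (P s r')) has_real_derivative F1 (P s r)) (at r)" for s r
    using smooth_DERIV'[OF f, of "P s r" v r] by (simp add: Pv F1_def)
  have d2: "((\<lambda>s'. F1 (P s' r)) has_real_derivative G (P s r)) (at s)" for s r
    using smooth_DERIV'[OF sF1, of "P s r" u s] by (simp add: Pu G_def)
  have d3: "((\<lambda>s'. f (P s' r)) has_real_derivative F2 (P s r)) (at s)" for s r
    using smooth_DERIV'[OF f, of "P s r" u s] by (simp add: Pu F2_def)
  have cG: "continuous_on UNIV (\<lambda>z::real\<times>real. G (P (fst z) (snd z)))"
    unfolding P_def by (rule cont_plane[OF smooth_cont[OF sG]])
  have cF1: "continuous_on S (\<lambda>r. F1 (P s r))" for s S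
    using cont_line[OF smooth_cont[OF sF1], of S "a(u := s)" v] by (simp add: P_def)
  have cGl: "continuous_on S (\<lambda>r. G (P s r))" for s S
    using cont_line[OF smooth_cont[OF sG], of S "a(u := s)" v] by (simp add: P_def)
  define r0 where "r0 = a v - 1"
  have ftc: "f (P s r) = f (P s r0) + integral {r0..r} (\<lambda>\<rho>. F1 (P s \<rho>))" if "r0 \<le> r" for s r
  proof -
    have "((\<lambda>\<rho>. F1 (P s \<rho>)) has_integral (f (P s r) - f (P s r0))) {r0..r}"
      using that
      by (intro fundamental_theorem_of_calculus)
         (auto simp: has_real_derivative_iff_has_vector_derivative[symmetric]
               intro: has_field_derivative_at_within d1)
    then show ?thesis by (simp add: integral_unique)
  qed
  have eqF2: "F2 (P s r) = F2 (P s r0) + integral {r0..r} (\<lambda>\<rho>. G (P s \<rho>))" if "r0 \<le> r" for s r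
  proof -
    have L: "((\<lambda>s'. integral (cbox r0 r) (\<lambda>\<rho>. F1 (P s' \<rho>))) has_field_derivative
              integral (cbox r0 r) (\<lambda>\<rho>. G (P s \<rho>))) (at s within UNIV)"
    proof (rule leibniz_rule_field_derivative)
      show "((\<lambda>x. F1 (P x t)) has_field_derivative G (P x t)) (at x within UNIV)" for x t
        using d2 by simp
      show "(\<lambda>\<rho>. F1 (P x \<rho>)) integrable_on cbox r0 r" for x
        using cF1 by (simp add: integrable_continuous_real)
      show "continuous_on (UNIV \<times> cbox r0 r) (\<lambda>(x, t). G (P x t))"
        using continuous_on_subset[OF cG] by (simp add: case_prod_beta')
    qed auto
    have "((\<lambda>s'. f (P s' r0) + integral {r0..r} (\<lambda>\<rho>. F1 (P s' \<rho>))) has_real_derivative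
            F2 (P s r0) + integral {r0..r} (\<lambda>\<rho>. G (P s \<rho>))) (at s)"
      using L by (intro DERIV_add d3) simp
    moreover have "(\<lambda>s'. f (P s' r0) + integral {r0..r} (\<lambda>\<rho>. F1 (P s' \<rho>))) = (\<lambda>s'. f (P s' r))"
      using ftc[OF that] by auto
    ultimately have "((\<lambda>s'. f (P s' r)) has_real_derivative
            F2 (P s r0) + integral {r0..r} (\<lambda>\<rho>. G (P s \<rho>))) (at s)" by simp
    then show ?thesis using d3 DERIV_unique by blast
  qed
  define g where "g = (\<lambda>\<rho>. G (P (a u) \<rho>))"
  have "((\<lambda>r. integral {r0..r} g) has_real_derivative g (a v)) (at (a v) within {r0..a v + 1})"
    unfolding g_def by (rule integral_has_real_derivative[OF cGl]) (simp add: r0_def)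
  then have "((\<lambda>r. integral {r0..r} g) has_real_derivative g (a v)) (at (a v))"
    using at_within_Icc_at[of r0 "a v" "a v + 1"] by (simp add: r0_def)
  then have "((\<lambda>r. F2 (P (a u) r0) + integral {r0..r} g) has_real_derivative g (a v)) (at (a v))"
    by (intro DERIV_add[where D=0, simplified] DERIV_const)
  then have D1: "((\<lambda>r. F2 (P (a u) r)) has_real_derivative g (a v)) (at (a v))"
  proof (rule has_field_derivative_transform_within_open[where S="{r0<..}"])
    show "a v \<in> {r0<..}" by (simp add: r0_def)
    fix r assume "r \<in> {r0<..}"
    then show "F2 (P (a u) r0) + integral {r0..r} g = F2 (P (a u) r)"
      using eqF2[of r "a u"] by (simp add: g_def)
  qed simp
  have "P (a u) r = a(v := r)" for r by (simp add: P_def)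
  then have D2: "((\<lambda>r. F2 (P (a u) r)) has_real_derivative pd v F2 a) (at (a v))"
    using smooth_DERIV[OF sF2, of a v] by simp
  have "P (a u) (a v) = a" by (simp add: P_def)
  then show ?thesis using DERIV_unique[OF D2 D1] by (simp add: g_def G_def F1_def F2_def)
qed

lemma schwarz:
  assumes f: "smooth f"
  shows "pd v (pd u f) = pd u (pd v f)"
  using schwarz_pt[OF f] by (cases "u = v") auto


lemma depends_only_mono: "depends_only f S \<Longrightarrow> S \<subseteq> S' \<Longrightarrow> depends_only f S'"
  unfolding depends_only_def by blast

lemma depends_only_dep:
  assumes "depends_only f S" shows "dep f \<subseteq> S"
proof
  fix x assume "x \<in> dep f"
  then obtain a s where ne: "f (a(x := s)) \<noteq> f a" unfolding dep_def by auto
  show "x \<in> S"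
  proof (rule ccontr)
    assume "x \<notin> S"
    then have "\<forall>v\<in>S. (a(x := s)) v = a v" by auto
    then show False using assms ne unfolding depends_only_def by blast
  qed
qed

lemma depends_only_bin:
  assumes "depends_only f S" "depends_only g S'"
  shows "depends_only (\<lambda>a. h (f a) (g a)) (S \<union> S')"
  unfolding depends_only_def
proof (intro allI impI)
  fix a b :: pt assume ab: "\<forall>v\<in>S \<union> S'. a v = b v"
  then have "f a = f b" "g a = g b" using assms unfolding depends_only_def by auto
  then show "h (f a) (g a) = h (f b) (g b)" by simp
qed

lemma nodep_upd: "v \<notin> dep f \<Longrightarrow> f (a(v := s)) = f a"
  unfolding dep_def by auto

lemma pd_nodep: "v \<notin> dep f \<Longrightarrow> pd v f = (\<lambda>_. 0)"
proof (rule pd_eqI)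
  fix a assume "v \<notin> dep f"
  then have "(\<lambda>s. f (a(v := s))) = (\<lambda>s. f a)" by (auto intro: nodep_upd)
  then show "((\<lambda>s. f (a(v := s))) has_real_derivative 0) (at (a v))" by simp
qed

lemma depends_only_pd:
  assumes "depends_only f S"
  shows "depends_only (pd v f) S"
  unfolding depends_only_def
proof (intro allI impI)
  fix a b :: pt assume ab: "\<forall>w\<in>S. a w = b w"
  show "pd v f a = pd v f b"
  proof (cases "v \<in> S")
    case True
    then have "(\<lambda>s. f (a(v := s))) = (\<lambda>s. f (b(v := s)))" "a v = b v"
      using assms ab unfolding depends_only_def by auto
    then show ?thesis unfolding pd_def by simp
  next
    case False
    then have "v \<notin> dep f" using depends_only_dep[OF assms] by auto
    then show ?thesis by (simp add: pd_nodep)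
  qed
qed

lemma AlgE:
  assumes "f \<in> Alg m"
  obtains S where "finite S" "S \<subseteq> vars m" "depends_only f S" "smooth f"
  using assms unfolding Alg_def by blast

lemma AlgI: "finite S \<Longrightarrow> S \<subseteq> vars m \<Longrightarrow> depends_only f S \<Longrightarrow> smooth f \<Longrightarrow> f \<in> Alg m"
  unfolding Alg_def by blast

lemma Alg_smooth: "f \<in> Alg m \<Longrightarrow> smooth f"
  by (auto elim: AlgE)

lemma Alg_const: "(\<lambda>_. c) \<in> Alg m"
  by (rule AlgI[of "{}"]) (auto simp: depends_only_def smooth_const)

lemma Alg_zero: "(\<lambda>_. 0) \<in> Alg m"
  by (rule Alg_const)

lemma Alg_coord: "v \<in> vars m \<Longrightarrow> (\<lambda>a. a v) \<in> Alg m"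
  by (rule AlgI[of "{v}"]) (auto simp: depends_only_def smooth_coord)

lemma Alg_bin:
  assumes "f \<in> Alg m" "g \<in> Alg m" "smooth (\<lambda>a. h (f a) (g a))"
  shows "(\<lambda>a. h (f a) (g a)) \<in> Alg m"
proof -
  obtain S where S: "finite S" "S \<subseteq> vars m" "depends_only f S" using assms(1) by (rule AlgE)
  obtain S' where S': "finite S'" "S' \<subseteq> vars m" "depends_only g S'" using assms(2) by (rule AlgE)
  show ?thesis
    by (rule AlgI[of "S \<union> S'"]) (use S S' assms(3) depends_only_bin[OF S(3) S'(3)] in auto)
qed

lemma Alg_add: "f \<in> Alg m \<Longrightarrow> g \<in> Alg m \<Longrightarrow> (\<lambda>a. f a + g a) \<in> Alg m"
  by (rule Alg_bin) (auto intro: smooth_add Alg_smooth)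

lemma Alg_mult: "f \<in> Alg m \<Longrightarrow> g \<in> Alg m \<Longrightarrow> (\<lambda>a. f a * g a) \<in> Alg m"
  by (rule Alg_bin) (auto intro: smooth_mult Alg_smooth)

lemma Alg_diff: "f \<in> Alg m \<Longrightarrow> g \<in> Alg m \<Longrightarrow> (\<lambda>a. f a - g a) \<in> Alg m"
  by (rule Alg_bin) (auto intro: smooth_diff Alg_smooth)

lemma Alg_cmult: "f \<in> Alg m \<Longrightarrow> (\<lambda>a. c * f a) \<in> Alg m"
  using Alg_mult[OF Alg_const] .

lemma Alg_uminus: "f \<in> Alg m \<Longrightarrow> (\<lambda>a. - f a) \<in> Alg m"
  using Alg_cmult[of f m "-1"] by simp

lemma Alg_sum: "finite I \<Longrightarrow> (\<And>i. i \<in> I \<Longrightarrow> f i \<in> Alg m) \<Longrightarrow> (\<lambda>a. \<Sum>i\<in>I. f i a) \<in> Alg m"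
  by (induction I rule: finite_induct) (auto intro: Alg_const Alg_add)

lemma Alg_pd: "f \<in> Alg m \<Longrightarrow> pd v f \<in> Alg m"
  by (erule AlgE, rule AlgI) (auto intro: depends_only_pd smooth_pd)

lemma Dgen_eq:
  assumes "finite S" "depends_only f S"
  shows "Dgen c f = (\<lambda>a. \<Sum>v\<in>S. c v a * pd v f a)"
proof
  fix a
  have sub: "dep f \<subseteq> S" using depends_only_dep[OF assms(2)] .
  have "(\<Sum>v\<in>dep f. c v a * pd v f a) = (\<Sum>v\<in>S. c v a * pd v f a)"
    by (rule sum.mono_neutral_left[OF assms(1) sub]) (auto simp: pd_nodep)
  then show "Dgen c f a = (\<Sum>v\<in>S. c v a * pd v f a)" by (simp add: Dgen_def)
qed

lemma pd_add: "smooth f \<Longrightarrow> smooth g \<Longrightarrow> pd v (\<lambda>a. f a + g a) = (\<lambda>a. pd v f a + pd v g a)"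
  by (rule pd_eqI) (intro DERIV_add smooth_DERIV)

lemma pd_cmult: "smooth f \<Longrightarrow> pd v (\<lambda>a. k * f a) = (\<lambda>a. k * pd v f a)"
  by (rule pd_eqI) (intro DERIV_cmult smooth_DERIV)

lemma Dgen_add:
  assumes "f \<in> Alg m" "g \<in> Alg m"
  shows "Dgen c (\<lambda>a. f a + g a) = (\<lambda>a. Dgen c f a + Dgen c g a)"
proof -
  obtain S where S: "finite S" "S \<subseteq> vars m" "depends_only f S" "smooth f" using assms(1) by (rule AlgE)
  obtain S' where S': "finite S'" "S' \<subseteq> vars m" "depends_only g S'" "smooth g" using assms(2) by (rule AlgE)
  have f: "depends_only f (S \<union> S')" and g: "depends_only g (S \<union> S')"
    using S S' by (auto intro: depends_only_mono)
  have fg: "depends_only (\<lambda>a. f a + g a) (S \<union> S')"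
    using depends_only_bin[OF S(3) S'(3)] .
  show ?thesis
    using S S'
    by (simp add: Dgen_eq[OF _ f] Dgen_eq[OF _ g] Dgen_eq[OF _ fg] pd_add sum.distrib algebra_simps)
qed

lemma Dgen_cmult:
  assumes "f \<in> Alg m"
  shows "Dgen c (\<lambda>a. k * f a) = (\<lambda>a. k * Dgen c f a)"
proof -
  obtain S where S: "finite S" "S \<subseteq> vars m" "depends_only f S" "smooth f" using assms(1) by (rule AlgE)
  have fg: "depends_only (\<lambda>a. k * f a) S"
    using S by (auto simp: depends_only_def)
  show ?thesis
    using S by (simp add: Dgen_eq[OF _ S(3)] Dgen_eq[OF _ fg] pd_cmult sum_distrib_left algebra_simps)
qed

lemma Dgen_zero: "Dgen c (\<lambda>_. 0) = (\<lambda>_. 0)"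
  by (simp add: Dgen_eq[of "{}"] depends_only_def)

lemma Dgen_T:
  assumes "depends_only f {T}" "c T = (\<lambda>_. 0)"
  shows "Dgen c f = (\<lambda>_. 0)"
  using assms by (simp add: Dgen_eq[of "{T}"])

lemma Dgen_uminus:
  assumes "f \<in> Alg m"
  shows "Dgen c (\<lambda>a. - f a) = (\<lambda>a. - Dgen c f a)"
  using Dgen_cmult[OF assms, of c "-1"] by simp

lemma Dgen_diff:
  assumes "f \<in> Alg m" "g \<in> Alg m"
  shows "Dgen c (\<lambda>a. f a - g a) = (\<lambda>a. Dgen c f a - Dgen c g a)"
  using Dgen_add[OF assms(1) Alg_uminus[OF assms(2)], of c] Dgen_uminus[OF assms(2), of c] by simp

lemma Dgen_sum:
  assumes "finite I" "\<And>i. i \<in> I \<Longrightarrow> f i \<in> Alg m"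
  shows "Dgen c (\<lambda>a. \<Sum>i\<in>I. k i * f i a) = (\<lambda>a. \<Sum>i\<in>I. k i * Dgen c (f i) a)"
  using assms
proof (induction I rule: finite_induct)
  case empty then show ?case by (simp add: Dgen_zero)
next
  case (insert i I)
  have A: "(\<lambda>a. k i * f i a) \<in> Alg m" using insert by (auto intro: Alg_cmult)
  have B: "(\<lambda>a. \<Sum>i\<in>I. k i * f i a) \<in> Alg m" using insert by (auto intro!: Alg_sum Alg_cmult)
  have "Dgen c (\<lambda>a. \<Sum>i\<in>insert i I. k i * f i a) = Dgen c (\<lambda>a. k i * f i a + (\<Sum>i\<in>I. k i * f i a))"
    using insert by simp
  also have "\<dots> = (\<lambda>a. Dgen c (\<lambda>a. k i * f i a) a + Dgen c (\<lambda>a. \<Sum>i\<in>I. k i * f i a) a)"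
    by (rule Dgen_add[OF A B])
  also have "Dgen c (\<lambda>a. k i * f i a) = (\<lambda>a. k i * Dgen c (f i) a)"
    by (rule Dgen_cmult) (use insert in auto)
  also have "(\<lambda>a. (\<lambda>a. k i * Dgen c (f i) a) a + Dgen c (\<lambda>a. \<Sum>i\<in>I. k i * f i a) a) = (\<lambda>a. \<Sum>i\<in>insert i I. k i * Dgen c (f i) a)"
    using insert by simp
  finally show ?case .
qed

lemma Dgen_Alg:
  assumes "f \<in> Alg m" "\<And>v. v \<in> vars m \<Longrightarrow> c v \<in> Alg m"
  shows "Dgen c f \<in> Alg m"
proof -
  obtain S where S: "finite S" "S \<subseteq> vars m" "depends_only f S" "smooth f" using assms(1) by (rule AlgE)
  have "(\<lambda>a. \<Sum>v\<in>S. c v a * pd v f a) \<in> Alg m"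
    using S assms by (intro Alg_sum Alg_mult Alg_pd) auto
  then show ?thesis using Dgen_eq[OF S(1) S(3)] by simp
qed

definition NT :: "fn \<Rightarrow> bool" where
  "NT f \<longleftrightarrow> (\<forall>a s. f (a(T := s)) = f a)"

lemma NT_notin_dep: "NT f \<Longrightarrow> T \<notin> dep f"
  unfolding NT_def dep_def by auto

lemma NT_pd:
  assumes "NT f"
  shows "NT (pd v f)"
proof (cases "v = T")
  case True
  then show ?thesis using pd_nodep[OF NT_notin_dep[OF assms]] by (simp add: NT_def)
next
  case False
  have "pd v f (a(T := s)) = pd v f a" for a s
  proof -
    have "a(T := s, v := r) = (a(v := r))(T := s)" for r using False by (simp add: fun_upd_twist)
    then have "(\<lambda>r. f (a(T := s, v := r))) = (\<lambda>r. f (a(v := r)))"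
      using assms by (simp add: NT_def)
    then show ?thesis using False by (simp add: pd_def)
  qed
  then show ?thesis by (simp add: NT_def)
qed

lemma NT_Dgen:
  assumes "NT f" "\<And>v. NT (c v)"
  shows "NT (Dgen c f)"
  using assms NT_pd unfolding NT_def Dgen_def by simp

lemma NT_const: "NT (\<lambda>_. c)" by (simp add: NT_def)

lemma Dgen_pdT:
  assumes f: "f \<in> Alg m" and c: "\<And>v. v \<in> vars m \<Longrightarrow> c v \<in> Alg m \<and> NT (c v)"
  shows "pd T (Dgen c f) = Dgen c (pd T f)"
proof -
  obtain S where S: "finite S" "S \<subseteq> vars m" "depends_only f S" "smooth f" using f by (rule AlgE)
  have "pd T (\<lambda>a. \<Sum>v\<in>S. c v a * pd v f a) = (\<lambda>a. \<Sum>v\<in>S. c v a * pd T (pd v f) a)"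
  proof (rule pd_eqI)
    fix a
    have e: "(\<lambda>s. \<Sum>v\<in>S. c v (a(T := s)) * pd v f (a(T := s))) = (\<lambda>s. \<Sum>v\<in>S. c v a * pd v f (a(T := s)))"
    proof (intro ext sum.cong refl)
      fix s v assume "v \<in> S"
      then have "NT (c v)" using c S(2) by auto
      then show "c v (a(T := s)) * pd v f (a(T := s)) = c v a * pd v f (a(T := s))"
        by (simp add: NT_def)
    qed
    have "((\<lambda>s. \<Sum>v\<in>S. c v a * pd v f (a(T := s))) has_real_derivative (\<Sum>v\<in>S. c v a * pd T (pd v f) a)) (at (a T))"
      using S by (intro DERIV_sum DERIV_cmult smooth_DERIV smooth_pd)
    then show "((\<lambda>s. \<Sum>v\<in>S. c v (a(T := s)) * pd v f (a(T := s))) has_real_derivative (\<Sum>v\<in>S. c v a * pd T (pd v f) a)) (at (a T))"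
      using e by simp
  qed
  also have "\<dots> = (\<lambda>a. \<Sum>v\<in>S. c v a * pd v (pd T f) a)"
    using schwarz[OF S(4)] by simp
  finally show ?thesis
    using Dgen_eq[OF S(1) S(3)] Dgen_eq[OF S(1) depends_only_pd[OF S(3)]] by simp
qed


lemma vars_simps:
  "T \<in> vars m"
  "X \<mu> \<in> vars m \<longleftrightarrow> \<mu> \<in> {1..m}"
  "U \<beta> i \<in> vars m \<longleftrightarrow> (\<beta> = 1 \<and> i \<in> MI m \<and> i 1 = 0) \<or> (\<beta> \<in> {2..m} \<and> i \<in> MI m)"
  "P i \<in> vars m \<longleftrightarrow> i \<in> MI m \<and> i 1 \<le> 1"
  by (auto simp: vars_def)

lemma inc_MI: "i \<in> MI m \<Longrightarrow> \<mu> \<in> {1..m} \<Longrightarrow> inc i \<mu> \<in> MI m"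
  by (auto simp: MI_def inc_def)

lemma inc_apply: "inc i \<mu> j = (if j = \<mu> then Suc (i \<mu>) else i j)"
  by (simp add: inc_def)

lemma unit_mi_MI: "\<mu> \<in> {1..m} \<Longrightarrow> unit_mi \<mu> \<in> MI m"
  by (auto simp: MI_def unit_mi_def inc_def)

lemma unit_mi_apply: "unit_mi \<mu> j = (if j = \<mu> then 1 else 0)"
  by (simp add: unit_mi_def inc_def)

definition coefD :: "nat \<Rightarrow> nat \<Rightarrow> var \<Rightarrow> fn" where
  "coefD m \<mu> = (if \<mu> = 1 then coef1 m else coefA \<mu>)"

lemma D_eq: "D m \<mu> = Dgen (coefD m \<mu>)"
  by (simp add: D_def coefD_def)

lemma coefA_Alg:
  assumes "\<alpha> \<in> {2..m}" "v \<in> vars m"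
  shows "coefA \<alpha> v \<in> Alg m"
proof (cases v)
  case T then show ?thesis by (simp add: coefA_def Alg_const)
next
  case (X \<nu>) then show ?thesis by (simp add: coefA_def Alg_const)
next
  case (U \<beta> i)
  have "U \<beta> (inc i \<alpha>) \<in> vars m"
    using assms U by (auto simp: vars_simps inc_apply intro!: inc_MI)
  then show ?thesis using U by (simp add: coefA_def Alg_coord)
next
  case (P i)
  have "P (inc i \<alpha>) \<in> vars m"
    using assms P by (auto simp: vars_simps inc_apply intro!: inc_MI)
  then show ?thesis using P by (simp add: coefA_def Alg_coord)
qed

lemma coefA_NT: "NT (coefA \<alpha> v)"
  by (cases v) (auto simp: coefA_def NT_def)

lemma Dalpha_Alg: "\<alpha> \<in> {2..m} \<Longrightarrow> f \<in> Alg m \<Longrightarrow> Dalpha \<alpha> f \<in> Alg m"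
  unfolding Dalpha_def by (rule Dgen_Alg) (auto intro: coefA_Alg)

lemma Dalpha_NT: "NT f \<Longrightarrow> NT (Dalpha \<alpha> f)"
  unfolding Dalpha_def by (rule NT_Dgen) (auto intro: coefA_NT)

lemma foldr_funpow_closed:
  assumes "\<And>\<alpha> g. \<alpha> \<in> set xs \<Longrightarrow> Q g \<Longrightarrow> Q (F \<alpha> g)" "Q f"
  shows "Q (foldr (\<lambda>\<alpha> g. (F \<alpha> ^^ j \<alpha>) g) xs f)"
  using assms
proof (induction xs)
  case Nil then show ?case by simp
next
  case (Cons x xs)
  have q: "Q (foldr (\<lambda>\<alpha> g. (F \<alpha> ^^ j \<alpha>) g) xs f)" using Cons by auto
  have "Q ((F x ^^ n) g)" if "Q g" for n g
    using that by (induction n) (auto intro: Cons.prems(1))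
  then show ?case using q by simp
qed

lemma DN_Alg: "f \<in> Alg m \<Longrightarrow> DN m j f \<in> Alg m"
  unfolding DN_def by (rule foldr_funpow_closed[where Q="\<lambda>g. g \<in> Alg m"]) (auto intro: Dalpha_Alg)

lemma DN_NT: "NT f \<Longrightarrow> NT (DN m j f)"
  unfolding DN_def by (rule foldr_funpow_closed[where Q="NT"]) (auto intro: Dalpha_NT)

lemma uval_Alg:
  assumes "l \<in> {1..m}" "\<mu> \<in> {1..m}"
  shows "uval m l \<mu> \<in> Alg m"
proof (cases "l = 1 \<and> \<mu> = 1")
  case True
  have "(\<lambda>a. - (\<Sum>\<alpha>\<in>{2..m}. a (U \<alpha> (unit_mi \<alpha>)))) \<in> Alg m"
    by (intro Alg_uminus Alg_sum Alg_coord) (auto simp: vars_simps intro: unit_mi_MI)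
  then show ?thesis using True by (simp add: uval_def)
next
  case False
  have "U l (unit_mi \<mu>) \<in> vars m"
    using assms False by (auto simp: vars_simps unit_mi_apply intro: unit_mi_MI)
  moreover have "uval m l \<mu> = (\<lambda>a. a (U l (unit_mi \<mu>)))" using False by (auto simp: uval_def)
  ultimately show ?thesis by (simp add: Alg_coord)
qed

lemma Phi_Alg: "Phi m \<in> Alg m"
proof -
  have A: "(\<lambda>a. \<Sum>\<alpha>\<in>{2..m}. a (P (inc (unit_mi \<alpha>) \<alpha>))) \<in> Alg m"
    by (intro Alg_sum Alg_coord) (auto simp: vars_simps inc_apply unit_mi_apply intro!: inc_MI unit_mi_MI)
  have B: "(\<lambda>a. \<Sum>l\<in>{1..m}. \<Sum>\<mu>\<in>{1..m}. uval m l \<mu> a * uval m \<mu> l a) \<in> Alg m"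
    by (intro Alg_sum Alg_mult uval_Alg) auto
  show ?thesis unfolding Phi_def by (rule Alg_add[OF A B])
qed

lemma upd_T_simps [simp]: "(a(T := s)) (U \<beta> i) = a (U \<beta> i)" "(a(T := s)) (P i) = a (P i)"
  by simp_all

lemma uval_NT: "uval m l \<mu> (a(T := s)) = uval m l \<mu> a"
  by (simp add: uval_def)

lemma Phi_NT: "NT (Phi m)"
  unfolding NT_def Phi_def by (simp add: uval_NT)

lemma coef1_Alg:
  assumes "v \<in> vars m" and m1: "1 \<le> m"
  shows "coef1 m v \<in> Alg m"
proof (cases v)
  case T then show ?thesis by (simp add: coef1_def Alg_const)
next
  case (X \<nu>) then show ?thesis by (simp add: coef1_def Alg_const)
next
  case (U \<beta> i)
  show ?thesis
  proof (cases "\<beta> = 1")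
    case True
    then have "i \<in> MI m" using assms U by (auto simp: vars_simps)
    then have "(\<lambda>a. - (\<Sum>\<gamma>\<in>{2..m}. a (U \<gamma> (inc i \<gamma>)))) \<in> Alg m"
      by (intro Alg_uminus Alg_sum Alg_coord) (auto simp: vars_simps intro!: inc_MI)
    then show ?thesis using U True by (simp add: coef1_def)
  next
    case False
    then have "U \<beta> (inc i 1) \<in> vars m" using assms U by (auto simp: vars_simps intro!: inc_MI)
    then show ?thesis using U False by (simp add: coef1_def Alg_coord)
  qed
next
  case (P i)
  show ?thesis
  proof (cases "i 1 = 0")
    case True
    then have "P (inc i 1) \<in> vars m" using assms P by (auto simp: vars_simps inc_apply intro!: inc_MI)
    then show ?thesis using P True by (simp add: coef1_def Alg_coord)
  next
    case False
    have "(\<lambda>a. - DN m (i(1 := 0)) (Phi m) a) \<in> Alg m"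
      by (intro Alg_uminus DN_Alg Phi_Alg)
    then show ?thesis using P False by (simp add: coef1_def)
  qed
qed

lemma coef1_NT: "NT (coef1 m v)"
proof (cases v)
  case (P i)
  have "NT (\<lambda>a. - DN m (i(1 := 0)) (Phi m) a)"
    using DN_NT[OF Phi_NT, of m "i(1 := 0)"] by (simp add: NT_def)
  then show ?thesis using P by (simp add: coef1_def NT_def)
qed (auto simp: coef1_def NT_def)

lemma coefD_Alg: "\<mu> \<in> {1..m} \<Longrightarrow> v \<in> vars m \<Longrightarrow> coefD m \<mu> v \<in> Alg m"
  by (auto simp: coefD_def intro: coef1_Alg coefA_Alg)

lemma coefD_NT: "NT (coefD m \<mu> v)"
  by (auto simp: coefD_def intro: coef1_NT coefA_NT)

lemma coefD_T: "coefD m \<mu> T = (\<lambda>_. 0)"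
  by (simp add: coefD_def coef1_def coefA_def)

lemma D_Alg: "\<mu> \<in> {1..m} \<Longrightarrow> f \<in> Alg m \<Longrightarrow> D m \<mu> f \<in> Alg m"
  unfolding D_eq by (rule Dgen_Alg) (auto intro: coefD_Alg)

lemma D_T: "depends_only f {T} \<Longrightarrow> D m \<mu> f = (\<lambda>_. 0)"
  unfolding D_eq by (rule Dgen_T) (simp_all add: coefD_T)

lemma D_pdT: "\<mu> \<in> {1..m} \<Longrightarrow> f \<in> Alg m \<Longrightarrow> pd T (D m \<mu> f) = D m \<mu> (pd T f)"
  unfolding D_eq by (rule Dgen_pdT) (auto intro: coefD_Alg coefD_NT)

lemma Dmulti_Alg: "f \<in> Alg m \<Longrightarrow> Dmulti m i f \<in> Alg m"
  unfolding Dmulti_def by (rule foldr_funpow_closed[where Q="\<lambda>g. g \<in> Alg m"]) (auto intro: D_Alg)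

lemma evcoef_Alg:
  assumes E: "\<forall>\<mu>\<in>{1..m}. E \<mu> \<in> Alg m" and Ep: "Ep \<in> Alg m" and v: "v \<in> vars m" and m1: "1 \<le> m"
  shows "evcoef m E Ep v \<in> Alg m"
proof (cases v)
  case (U \<beta> i)
  then have "\<beta> \<in> {1..m}" using v m1 by (auto simp: vars_simps)
  then show ?thesis using U E by (auto simp: evcoef_def intro: Dmulti_Alg)
qed (auto simp: evcoef_def Alg_const Dmulti_Alg Ep)

lemma ev_Alg:
  assumes "\<forall>\<mu>\<in>{1..m}. E \<mu> \<in> Alg m" "Ep \<in> Alg m" "f \<in> Alg m" "1 \<le> m"
  shows "ev m E Ep f \<in> Alg m"
  unfolding ev_def by (rule Dgen_Alg) (use assms evcoef_Alg in auto)

lemma Dt_Alg: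
  assumes "\<forall>\<mu>\<in>{1..m}. E \<mu> \<in> Alg m" "Ep \<in> Alg m" "f \<in> Alg m" "1 \<le> m"
  shows "Dt m E Ep f \<in> Alg m"
  unfolding Dt_def by (intro Alg_add Alg_pd ev_Alg assms)

lemma ev_T: "depends_only f {T} \<Longrightarrow> ev m E Ep f = (\<lambda>_. 0)"
  unfolding ev_def by (rule Dgen_T) (simp_all add: evcoef_def)

lemma Dt_T: "depends_only f {T} \<Longrightarrow> Dt m E Ep f = pd T f"
  by (simp add: Dt_def ev_T)

lemma pd_zero: "pd v (\<lambda>_. 0) = (\<lambda>_. 0)"
  by (rule pd_const)

lemma Dt_zero: "Dt m E Ep (\<lambda>_. 0) = (\<lambda>_. 0)"
  by (simp add: Dt_def ev_def Dgen_zero pd_zero)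

lemma D_zero: "D m \<mu> (\<lambda>_. 0) = (\<lambda>_. 0)"
  by (simp add: D_eq Dgen_zero)

lemma Dt_add:
  assumes "f \<in> Alg m" "g \<in> Alg m"
  shows "Dt m E Ep (\<lambda>a. f a + g a) = (\<lambda>a. Dt m E Ep f a + Dt m E Ep g a)"
  using assms by (simp add: Dt_def ev_def Dgen_add pd_add Alg_smooth algebra_simps)

lemma Dt_cmult:
  assumes "f \<in> Alg m"
  shows "Dt m E Ep (\<lambda>a. k * f a) = (\<lambda>a. k * Dt m E Ep f a)"
  using assms by (simp add: Dt_def ev_def Dgen_cmult[OF assms] pd_cmult Alg_smooth algebra_simps)

lemma Dt_uminus:
  assumes "f \<in> Alg m"
  shows "Dt m E Ep (\<lambda>a. - f a) = (\<lambda>a. - Dt m E Ep f a)"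
  using Dt_cmult[OF assms, of E Ep "-1"] by simp

lemma Dt_diff:
  assumes "f \<in> Alg m" "g \<in> Alg m"
  shows "Dt m E Ep (\<lambda>a. f a - g a) = (\<lambda>a. Dt m E Ep f a - Dt m E Ep g a)"
  using Dt_add[OF assms(1) Alg_uminus[OF assms(2)], of E Ep] Dt_uminus[OF assms(2), of E Ep] by simp

lemma D_add:
  assumes "f \<in> Alg m" "g \<in> Alg m"
  shows "D m' \<mu> (\<lambda>a. f a + g a) = (\<lambda>a. D m' \<mu> f a + D m' \<mu> g a)"
  unfolding D_eq by (rule Dgen_add[OF assms])

lemma D_cmult:
  assumes "f \<in> Alg m"
  shows "D m' \<mu> (\<lambda>a. k * f a) = (\<lambda>a. k * D m' \<mu> f a)"
  unfolding D_eq by (rule Dgen_cmult[OF assms])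

lemma D_uminus:
  assumes "f \<in> Alg m"
  shows "D m' \<mu> (\<lambda>a. - f a) = (\<lambda>a. - D m' \<mu> f a)"
  unfolding D_eq by (rule Dgen_uminus[OF assms])

lemma D_diff:
  assumes "f \<in> Alg m" "g \<in> Alg m"
  shows "D m' \<mu> (\<lambda>a. f a - g a) = (\<lambda>a. D m' \<mu> f a - D m' \<mu> g a)"
  unfolding D_eq by (rule Dgen_diff[OF assms])

lemma pd_sum:
  assumes "finite I" "\<And>i. i \<in> I \<Longrightarrow> smooth (f i)"
  shows "pd v (\<lambda>a. \<Sum>i\<in>I. k i * f i a) = (\<lambda>a. \<Sum>i\<in>I. k i * pd v (f i) a)"
  by (rule pd_eqI) (use assms in \<open>intro DERIV_sum DERIV_cmult smooth_DERIV\<close>)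

lemma Dt_sum:
  assumes "finite I" "\<And>i. i \<in> I \<Longrightarrow> f i \<in> Alg m"
  shows "Dt m E Ep (\<lambda>a. \<Sum>i\<in>I. k i * f i a) = (\<lambda>a. \<Sum>i\<in>I. k i * Dt m E Ep (f i) a)"
proof -
  have "pd T (\<lambda>a. \<Sum>i\<in>I. k i * f i a) = (\<lambda>a. \<Sum>i\<in>I. k i * pd T (f i) a)"
    using assms by (intro pd_sum) (auto intro: Alg_smooth)
  moreover have "ev m E Ep (\<lambda>a. \<Sum>i\<in>I. k i * f i a) = (\<lambda>a. \<Sum>i\<in>I. k i * ev m E Ep (f i) a)"
    unfolding ev_def by (rule Dgen_sum[OF assms])
  ultimately show ?thesis by (simp add: Dt_def sum.distrib algebra_simps)
qed

lemma Dt_D_comm: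
  assumes E: "\<forall>\<mu>\<in>{1..m}. E \<mu> \<in> Alg m" and Ep: "Ep \<in> Alg m"
    and ev_comm: "\<forall>f\<in>Alg m. \<forall>\<mu>\<in>{1..m}. ev m E Ep (D m \<mu> f) = D m \<mu> (ev m E Ep f)"
    and f: "f \<in> Alg m" and \<mu>: "\<mu> \<in> {1..m}"
  shows "Dt m E Ep (D m \<mu> f) = D m \<mu> (Dt m E Ep f)"
proof -
  have "Dt m E Ep (D m \<mu> f) = (\<lambda>a. D m \<mu> (pd T f) a + D m \<mu> (ev m E Ep f) a)"
    using D_pdT[OF \<mu> f] ev_comm f \<mu> by (simp add: Dt_def)
  also have "\<dots> = D m \<mu> (Dt m E Ep f)"
    unfolding Dt_def by (rule D_add[symmetric]) (use \<mu> in \<open>auto intro: Alg_pd ev_Alg[OF E Ep f] f\<close>)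
  finally show ?thesis .
qed


lemma antideriv:
  assumes g: "g \<in> Alg m" and gT: "depends_only g {T}"
  shows "\<exists>h\<in>Alg m. depends_only h {T} \<and> pd T h = g"
proof -
  define a0 :: pt where "a0 = (\<lambda>_. 0)"
  define g0 where "g0 = (\<lambda>s. g (a0(T := s)))"
  have cg0: "continuous_on S g0" for S
    unfolding g0_def by (rule cont_line[OF smooth_cont[OF Alg_smooth[OF g]]])
  have int: "g0 integrable_on {x..y}" for x y
    by (rule integrable_continuous_real[OF cg0])
  define F where "F x = integral {0..x} g0 - integral {x..0} g0" for x
  have DF: "(F has_real_derivative g0 x0) (at x0)" for x0
  proof -
    define c where "c = min 0 x0 - 1"
    have eq: "integral {c..x} g0 - integral {c..0} g0 = F x" if "x \<in> {c<..}" for x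
    proof (cases "x \<ge> 0")
      case True
      have "integral {c..0} g0 + integral {0..x} g0 = integral {c..x} g0"
        using True by (intro Henstock_Kurzweil_Integration.integral_combine int) (auto simp: c_def)
      moreover have "integral {x..0} g0 = 0"
      proof (cases "x = 0")
        case True then show ?thesis by simp
      next
        case False then have "{x..0} = {}" using \<open>x \<ge> 0\<close> by auto
        then show ?thesis by simp
      qed
      ultimately show ?thesis by (simp add: F_def)
    next
      case False
      have "integral {c..x} g0 + integral {x..0} g0 = integral {c..0} g0"
        using False that by (intro Henstock_Kurzweil_Integration.integral_combine int) (auto simp: c_def)
      moreover have "{0..x} = {}" using False by auto
      ultimately show ?thesis by (simp add: F_def)
    qed
    have "((\<lambda>x. integral {c..x} g0) has_real_derivative g0 x0) (at x0 within {c..x0 + 1})"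
      by (rule integral_has_real_derivative[OF cg0]) (auto simp: c_def)
    then have "((\<lambda>x. integral {c..x} g0) has_real_derivative g0 x0) (at x0)"
      using at_within_Icc_at[of c x0 "x0 + 1"] by (simp add: c_def)
    then have "((\<lambda>x. integral {c..x} g0 - integral {c..0} g0) has_real_derivative g0 x0) (at x0)"
      using DERIV_diff[OF _ DERIV_const, where D="g0 x0"] by simp
    then show ?thesis
      by (rule has_field_derivative_transform_within_open[where S="{c<..}"]) (use eq in \<open>auto simp: c_def\<close>)
  qed
  define h where "h = (\<lambda>a::pt. F (a T))"
  have hT: "depends_only h {T}" by (simp add: h_def depends_only_def)
  have gdef: "g a = g0 (a T)" for a
    using gT unfolding depends_only_def g0_def a0_def by (metis fun_upd_same singletonD)
  have pdT: "pd T h = g"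
    by (rule pd_eqI) (use DF in \<open>simp add: h_def gdef\<close>)
  have pdv: "pd v h = (\<lambda>_. 0)" if "v \<noteq> T" for v
    using depends_only_dep[OF hT] that by (intro pd_nodep) auto
  have cF: "continuous_on UNIV F"
    using DF by (intro continuous_at_imp_continuous_on) (auto intro: DERIV_continuous)
  have ch: "continuous_on UNIV h"
    unfolding h_def using continuous_on_compose2[OF cF continuous_on_product_coordinates[of T]] by auto
  have ph: "pdiff h"
  proof (rule pdiffI[where g="\<lambda>v a. if v = T then g0 (a T) else 0"])
    fix v a
    show "((\<lambda>s. h (a(v := s))) has_real_derivative (if v = T then g0 (a T) else 0)) (at (a v))"
      using DF by (cases "v = T") (simp_all add: h_def)
  qed
  have "smooth h"
  proof (subst smooth_iff, intro conjI allI ch ph)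
    fix v show "smooth (pd v h)"
      by (cases "v = T") (simp_all add: pdT pdv Alg_smooth[OF g] smooth_const)
  qed
  then have "h \<in> Alg m" by (intro AlgI[of "{T}"]) (auto simp: hT vars_simps)
  then show ?thesis using hT pdT by blast
qed


lemma Hform_alg: "\<omega> \<in> Hform m q \<Longrightarrow> \<omega> J \<in> Alg m"
  by (simp add: Hform_def)

lemma Hform_off: "\<omega> \<in> Hform m q \<Longrightarrow> \<not> (J \<subseteq> {1..m} \<and> int (card J) = q) \<Longrightarrow> \<omega> J = (\<lambda>_. 0)"
  by (simp add: Hform_def)

lemma zform_Hform: "zform \<in> Hform m q"
  by (simp add: Hform_def zform_def Alg_const)

lemma card_le_m: "J \<subseteq> {1..m} \<Longrightarrow> card J \<le> m"
  using card_mono[of "{1..m}" J] by simp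

lemma Hform_out:
  assumes "\<omega> \<in> Hform m q" "q < 0 \<or> q > int m"
  shows "\<omega> = zform"
proof (intro ext)
  fix J a
  have "\<not> (J \<subseteq> {1..m} \<and> int (card J) = q)"
    using assms(2) card_le_m[of J m] by auto
  then show "\<omega> J a = zform J a" using Hform_off[OF assms(1)] by (simp add: zform_def)
qed

lemma Hform_lin:
  assumes "\<omega>1 \<in> Hform m q" "\<omega>2 \<in> Hform m q"
  shows "(\<lambda>J a. c1 * \<omega>1 J a + c2 * \<omega>2 J a) \<in> Hform m q"
  using assms unfolding Hform_def by (auto intro!: Alg_add Alg_cmult)

lemma Hform_diff:
  assumes "\<omega>1 \<in> Hform m q" "\<omega>2 \<in> Hform m q"
  shows "(\<lambda>J a. \<omega>1 J a - \<omega>2 J a) \<in> Hform m q"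
  using Hform_lin[OF assms, of 1 "-1"] by simp

lemma Hform_uminus:
  assumes "\<omega> \<in> Hform m q"
  shows "(\<lambda>J a. - \<omega> J a) \<in> Hform m q"
  using Hform_lin[OF zform_Hform assms, of 0 "-1"] by simp

lemma Hform_sc:
  assumes "\<omega> \<in> Hform m q"
  shows "sc_form c \<omega> \<in> Hform m q"
  using Hform_lin[OF zform_Hform assms, of 0 c] by (simp add: sc_form_def)

lemma dH_lin:
  assumes "\<forall>J. \<omega>1 J \<in> Alg m" "\<forall>J. \<omega>2 J \<in> Alg m"
  shows "dH m (\<lambda>J a. c1 * \<omega>1 J a + c2 * \<omega>2 J a) = (\<lambda>J a. c1 * dH m \<omega>1 J a + c2 * dH m \<omega>2 J a)"
proof (intro ext)
  fix J a
  have "D m \<mu> (\<lambda>a. c1 * \<omega>1 K a + c2 * \<omega>2 K a) = (\<lambda>a. c1 * D m \<mu> (\<omega>1 K) a + c2 * D m \<mu> (\<omega>2 K) a)" for \<mu> K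
    using assms by (simp add: D_add[of _ m] D_cmult[of _ m] Alg_cmult)
  then show "dH m (\<lambda>J a. c1 * \<omega>1 J a + c2 * \<omega>2 J a) J a = c1 * dH m \<omega>1 J a + c2 * dH m \<omega>2 J a"
    by (simp add: dH_def sum.distrib sum_distrib_left algebra_simps)
qed

lemma dH_diff:
  assumes "\<forall>J. \<omega>1 J \<in> Alg m" "\<forall>J. \<omega>2 J \<in> Alg m"
  shows "dH m (\<lambda>J a. \<omega>1 J a - \<omega>2 J a) = (\<lambda>J a. dH m \<omega>1 J a - dH m \<omega>2 J a)"
  using dH_lin[OF assms, of 1 "-1"] by simp

lemma dH_zero: "dH m zform = zform"
  by (simp add: dH_def zform_def D_zero[unfolded zform_def] fun_eq_iff)

lemma dH_uminus:
  assumes "\<forall>J. \<omega> J \<in> Alg m"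
  shows "dH m (\<lambda>J a. - \<omega> J a) = (\<lambda>J a. - dH m \<omega> J a)"
  using dH_lin[OF _ assms, of zform 0 "-1"] by (simp add: zform_def Alg_const)

lemma dH_sc:
  assumes "\<forall>J. \<omega> J \<in> Alg m"
  shows "dH m (sc_form c \<omega>) = sc_form c (dH m \<omega>)"
  using dH_lin[OF _ assms, of zform 0 c] by (simp add: zform_def Alg_const sc_form_def)

lemma dH_top:
  assumes "\<theta> \<in> Hform m (int m)"
  shows "dH m \<theta> = zform"
proof (intro ext)
  fix J a
  show "dH m \<theta> J a = zform J a"
  proof (cases "J \<subseteq> {1..m}")
    case True
    have "\<theta> (J - {\<mu>}) = (\<lambda>_. 0)" if "\<mu> \<in> J" for \<mu>
    proof (rule Hform_off[OF assms])
      have "finite J" using True finite_subset by blast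
      then have "card (J - {\<mu>}) < card J" using that by (meson card_Diff1_less)
      then show "\<not> (J - {\<mu>} \<subseteq> {1..m} \<and> int (card (J - {\<mu>})) = int m)"
        using card_le_m[OF True] by auto
    qed
    then show ?thesis using True by (simp add: dH_def zform_def D_zero)
  qed (simp add: dH_def zform_def)
qed

lemma DtF_zform: "DtF m E Ep zform = zform"
  by (simp add: DtF_def zform_def Dt_zero)

locale cpe =
  fixes m :: nat and E :: "nat \<Rightarrow> fn" and Ep :: fn
  assumes m2: "m \<ge> 2"
    and E_alg: "\<forall>\<mu>\<in>{1..m}. E \<mu> \<in> Alg m" and Ep_alg: "Ep \<in> Alg m"
    and ev_comm: "\<forall>f\<in>Alg m. \<forall>\<mu>\<in>{1..m}. ev m E Ep (D m \<mu> f) = D m \<mu> (ev m E Ep f)"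
    and H_vanish: "\<forall>q. 1 \<le> q \<and> q \<le> int m - 2 \<longrightarrow> ZH m q \<subseteq> BH m q"
    and H0: "ZH m 0 = {\<omega> \<in> Hform m 0. depends_only (\<omega> {}) {T}}"
begin

lemma m1: "1 \<le> m" using m2 by simp

lemma Dt_Alg': "f \<in> Alg m \<Longrightarrow> Dt m E Ep f \<in> Alg m"
  using Dt_Alg[OF E_alg Ep_alg _ m1] .

lemma DtF_Hform: "\<omega> \<in> Hform m q \<Longrightarrow> DtF m E Ep \<omega> \<in> Hform m q"
  unfolding Hform_def DtF_def by (auto intro: Dt_Alg' simp: Dt_zero)

lemma DtF_dH:
  assumes "\<forall>J. \<omega> J \<in> Alg m"
  shows "DtF m E Ep (dH m \<omega>) = dH m (DtF m E Ep \<omega>)"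
proof (intro ext)
  fix J a
  show "DtF m E Ep (dH m \<omega>) J a = dH m (DtF m E Ep \<omega>) J a"
  proof (cases "J \<subseteq> {1..m}")
    case True
    have fin: "finite J" using True finite_subset by blast
    have e: "dH m \<omega> J = (\<lambda>a. \<Sum>\<mu>\<in>J. (-1) ^ card {\<nu>\<in>J. \<nu> < \<mu>} * D m \<mu> (\<omega> (J - {\<mu>})) a)"
      using True by (simp add: dH_def)
    have "DtF m E Ep (dH m \<omega>) J = (\<lambda>a. \<Sum>\<mu>\<in>J. (-1) ^ card {\<nu>\<in>J. \<nu> < \<mu>} * Dt m E Ep (D m \<mu> (\<omega> (J - {\<mu>}))) a)"
      unfolding DtF_def e by (rule Dt_sum[OF fin]) (use True assms in \<open>auto intro!: D_Alg\<close>)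
    also have "\<dots> = (\<lambda>a. \<Sum>\<mu>\<in>J. (-1) ^ card {\<nu>\<in>J. \<nu> < \<mu>} * D m \<mu> (Dt m E Ep (\<omega> (J - {\<mu>}))) a)"
      using True assms by (intro ext sum.cong refl) (auto simp: Dt_D_comm[OF E_alg Ep_alg ev_comm])
    finally show ?thesis using True by (simp add: dH_def DtF_def)
  next
    case False
    then show ?thesis by (simp add: dH_def DtF_def Dt_zero)
  qed
qed

lemma dH_Tform:
  assumes h: "depends_only h {T}"
  shows "dH m (\<lambda>J a. if J = {} then h a else 0) = zform"
proof (intro ext)
  fix J a
  have "D m \<mu> (\<lambda>a. if K then h a else 0) = (\<lambda>_. 0)" for \<mu> K
    by (cases K) (simp_all add: D_zero D_T[OF h])
  then show "dH m (\<lambda>J a. if J = {} then h a else 0) J a = zform J a"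
    by (simp add: dH_def zform_def)
qed

end


lemma ZE_iff: "(\<theta>, \<omega>) \<in> ZE m E Ep q \<longleftrightarrow> \<theta> \<in> Hform m (q - 1) \<and> \<omega> \<in> Hform m q \<and> DtF m E Ep \<omega> = dH m \<theta> \<and> dH m \<omega> = zform"
  by (auto simp: ZE_def Eform_def dE_def fun_eq_iff zform_def)

lemma BE_iff: "x \<in> BE m E Ep q \<longleftrightarrow> (\<exists>\<beta> \<alpha>. \<beta> \<in> Hform m (q - 2) \<and> \<alpha> \<in> Hform m (q - 1) \<and>
    x = ((\<lambda>J a. DtF m E Ep \<alpha> J a - dH m \<beta> J a), dH m \<alpha>))"
proof -
  have e: "q - 1 - 1 = q - 2" by simp
  show ?thesis by (auto simp: BE_def Eform_def dE_def image_iff e)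
qed

lemma ZH_iff: "\<omega> \<in> ZH m q \<longleftrightarrow> \<omega> \<in> Hform m q \<and> dH m \<omega> = zform"
  by (simp add: ZH_def)

lemma BH_iff: "\<eta> \<in> BH m q \<longleftrightarrow> (\<exists>\<beta>\<in>Hform m (q - 1). \<eta> = dH m \<beta>)"
  by (auto simp: BH_def)

lemma zero_form: "(0::form) = zform"
  by (simp add: zform_def fun_eq_iff)

context cpe
begin

lemma core:
  assumes q: "1 \<le> q" "q \<le> int m - 1"
    and z: "(\<theta>, \<omega>) \<in> ZE m E Ep q" and \<alpha>: "\<alpha> \<in> Hform m (q - 1)" and \<omega>\<alpha>: "\<omega> = dH m \<alpha>"
  shows "(\<theta>, \<omega>) \<in> BE m E Ep q"
proof -
  from z have \<theta>H: "\<theta> \<in> Hform m (q - 1)" and \<omega>H: "\<omega> \<in> Hform m q"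
    and Dt\<omega>: "DtF m E Ep \<omega> = dH m \<theta>" and d\<omega>: "dH m \<omega> = zform"
    by (auto simp: ZE_iff)
  define \<eta> where "\<eta> = (\<lambda>J a. \<theta> J a - DtF m E Ep \<alpha> J a)"
  have \<eta>H: "\<eta> \<in> Hform m (q - 1)"
    unfolding \<eta>_def by (intro Hform_diff \<theta>H DtF_Hform \<alpha>)
  have \<alpha>A: "\<forall>J. \<alpha> J \<in> Alg m" using \<alpha> by (simp add: Hform_alg)
  have D\<alpha>A: "\<forall>J. DtF m E Ep \<alpha> J \<in> Alg m" using DtF_Hform[OF \<alpha>] by (simp add: Hform_alg)
  have \<theta>A: "\<forall>J. \<theta> J \<in> Alg m" using \<theta>H by (simp add: Hform_alg)
  have d\<eta>: "dH m \<eta> = zform"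
  proof -
    have "dH m \<eta> = (\<lambda>J a. dH m \<theta> J a - dH m (DtF m E Ep \<alpha>) J a)"
      unfolding \<eta>_def by (rule dH_diff[OF \<theta>A D\<alpha>A])
    also have "dH m (DtF m E Ep \<alpha>) = DtF m E Ep \<omega>"
      using DtF_dH[OF \<alpha>A] \<omega>\<alpha> by simp
    finally show ?thesis using Dt\<omega> by (simp add: zform_def)
  qed
  show ?thesis
  proof (cases "q \<ge> 2")
    case True
    have "\<eta> \<in> ZH m (q - 1)" using \<eta>H d\<eta> by (simp add: ZH_iff)
    moreover have "1 \<le> q - 1 \<and> q - 1 \<le> int m - 2" using True q by simp
    ultimately have "\<eta> \<in> BH m (q - 1)" using H_vanish by blast
    then obtain \<beta> where \<beta>: "\<beta> \<in> Hform m (q - 1 - 1)" and \<eta>\<beta>: "\<eta> = dH m \<beta>" by (auto simp: BH_iff)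
    have \<beta>A: "\<forall>J. \<beta> J \<in> Alg m" using \<beta> by (simp add: Hform_alg)
    have nb: "(\<lambda>J a. - \<beta> J a) \<in> Hform m (q - 2)"
      using Hform_uminus[OF \<beta>] by (simp add: algebra_simps)
    have "(\<theta>, \<omega>) = ((\<lambda>J a. DtF m E Ep \<alpha> J a - dH m (\<lambda>J a. - \<beta> J a) J a), dH m \<alpha>)"
    proof -
      have "\<theta> = (\<lambda>J a. DtF m E Ep \<alpha> J a + \<eta> J a)" by (simp add: \<eta>_def)
      then show ?thesis using \<omega>\<alpha> \<eta>\<beta> by (simp add: dH_uminus[OF \<beta>A])
    qed
    then show ?thesis unfolding BE_iff using nb \<alpha> by blast
  next
    case False
    then have q1: "q = 1" using q by simp
    have "\<eta> \<in> ZH m 0" using \<eta>H d\<eta> q1 by (simp add: ZH_iff)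
    then have gT: "depends_only (\<eta> {}) {T}" using H0 by auto
    have gA: "\<eta> {} \<in> Alg m" using \<eta>H by (simp add: Hform_alg)
    obtain h where hA: "h \<in> Alg m" and hT: "depends_only h {T}" and hd: "pd T h = \<eta> {}"
      using antideriv[OF gA gT] by blast
    define hf :: form where "hf = (\<lambda>J a. if J = {} then h a else (0::real))"
    have hfA: "\<forall>J. hf J \<in> Alg m"
    proof
      fix J show "hf J \<in> Alg m"
        by (cases "J = {}") (simp_all add: hf_def hA Alg_const)
    qed
    have hfH: "hf \<in> Hform m 0"
      unfolding Hform_def using hfA by (auto simp: hf_def fun_eq_iff)
    have Dthf: "Dt m E Ep (hf J) = \<eta> J" for J
    proof (cases "J = {}")
      case True
      then have "hf J = h" by (simp add: hf_def fun_eq_iff)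
      then show ?thesis using True Dt_T[OF hT] hd by simp
    next
      case False
      then have "\<not> (J \<subseteq> {1..m} \<and> int (card J) = q - 1)"
        using q1 by (auto dest: finite_subset)
      then have "\<eta> J = (\<lambda>_. 0)" using Hform_off[OF \<eta>H] by blast
      moreover have "hf J = (\<lambda>_. 0)" using False by (simp add: hf_def)
      ultimately show ?thesis by (simp add: Dt_zero)
    qed
    define \<alpha>' where "\<alpha>' = (\<lambda>J a. 1 * \<alpha> J a + 1 * hf J a)"
    have \<alpha>'H: "\<alpha>' \<in> Hform m (q - 1)"
      unfolding \<alpha>'_def using q1 by (intro Hform_lin \<alpha>) (simp add: hfH)
    have "dH m \<alpha>' = (\<lambda>J a. 1 * dH m \<alpha> J a + 1 * dH m hf J a)"
      unfolding \<alpha>'_def by (rule dH_lin[OF \<alpha>A hfA])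
    also have "dH m hf = zform" unfolding hf_def by (rule dH_Tform[OF hT])
    finally have d\<alpha>': "dH m \<alpha>' = \<omega>" using \<omega>\<alpha> by (simp add: zform_def)
    have Dt\<alpha>': "DtF m E Ep \<alpha>' = \<theta>"
    proof (intro ext)
      fix J a
      have "Dt m E Ep (\<alpha>' J) = (\<lambda>a. Dt m E Ep (\<alpha> J) a + Dt m E Ep (hf J) a)"
        unfolding \<alpha>'_def using \<alpha>A hfA by (simp add: Dt_add[of _ m])
      then show "DtF m E Ep \<alpha>' J a = \<theta> J a"
        by (simp add: DtF_def Dthf \<eta>_def)
    qed
    have "(\<theta>, \<omega>) = ((\<lambda>J a. DtF m E Ep \<alpha>' J a - dH m zform J a), dH m \<alpha>')"
      using Dt\<alpha>' d\<alpha>' by (simp add: dH_zero) (simp add: zform_def)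
    then show ?thesis unfolding BE_iff using \<alpha>'H zform_Hform by blast
  qed
qed

end


lemma D_const: "D m \<mu> (\<lambda>_. c) = (\<lambda>_. 0)"
  by (rule D_T) (simp add: depends_only_def)

lemma Dt_const: "Dt m E Ep (\<lambda>_. c) = (\<lambda>_. 0)"
  by (subst Dt_T) (simp_all add: depends_only_def pd_const)

lemma BE_zero_pair: "(zform, zform) \<in> BE m E Ep q"
  unfolding BE_iff
  by (rule exI[of _ zform], rule exI[of _ zform])
     (simp add: zform_Hform DtF_zform dH_zero, simp add: zform_def)

lemma neg1_sq: "((-1::real) ^ n) * ((-1) ^ n) = 1"
  by (simp add: power_mult_distrib[symmetric])

context cpe
begin

lemma eta_closed:
  assumes "(\<theta>, \<omega>) \<in> ZE m E Ep q" "\<alpha> \<in> Hform m (q - 1)" "\<omega> = dH m \<alpha>"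
  shows "(\<lambda>J a. \<theta> J a - DtF m E Ep \<alpha> J a) \<in> ZH m (q - 1)"
proof -
  from assms(1) have \<theta>H: "\<theta> \<in> Hform m (q - 1)" and Dt\<omega>: "DtF m E Ep \<omega> = dH m \<theta>"
    by (auto simp: ZE_iff)
  have \<alpha>A: "\<forall>J. \<alpha> J \<in> Alg m" using assms(2) by (simp add: Hform_alg)
  have D\<alpha>A: "\<forall>J. DtF m E Ep \<alpha> J \<in> Alg m" using DtF_Hform[OF assms(2)] by (simp add: Hform_alg)
  have \<theta>A: "\<forall>J. \<theta> J \<in> Alg m" using \<theta>H by (simp add: Hform_alg)
  have "dH m (\<lambda>J a. \<theta> J a - DtF m E Ep \<alpha> J a) = (\<lambda>J a. dH m \<theta> J a - dH m (DtF m E Ep \<alpha>) J a)"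
    by (rule dH_diff[OF \<theta>A D\<alpha>A])
  also have "dH m (DtF m E Ep \<alpha>) = DtF m E Ep \<omega>"
    using DtF_dH[OF \<alpha>A] assms(3) by simp
  finally have "dH m (\<lambda>J a. \<theta> J a - DtF m E Ep \<alpha> J a) = zform" using Dt\<omega> by (simp add: zform_def)
  moreover have "(\<lambda>J a. \<theta> J a - DtF m E Ep \<alpha> J a) \<in> Hform m (q - 1)"
    by (intro Hform_diff \<theta>H DtF_Hform assms(2))
  ultimately show ?thesis by (simp add: ZH_iff)
qed

lemma part_vanish:
  "\<forall>q. (q < 0 \<or> (1 \<le> q \<and> q \<le> int m - 2) \<or> q > int m + 1) \<longrightarrow> ZE m E Ep q \<subseteq> BE m E Ep q"
proof (intro allI impI subsetI)
  fix q x assume hq: "q < 0 \<or> (1 \<le> q \<and> q \<le> int m - 2) \<or> q > int m + 1" and x: "x \<in> ZE m E Ep q"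
  obtain \<theta> \<omega> where x\<theta>: "x = (\<theta>, \<omega>)" by (cases x)
  from x x\<theta> have \<theta>H: "\<theta> \<in> Hform m (q - 1)" and \<omega>H: "\<omega> \<in> Hform m q" and d\<omega>: "dH m \<omega> = zform"
    by (auto simp: ZE_iff)
  show "x \<in> BE m E Ep q"
  proof (cases "1 \<le> q \<and> q \<le> int m - 2")
    case True
    moreover have "\<omega> \<in> ZH m q" using \<omega>H d\<omega> by (simp add: ZH_iff)
    ultimately have "\<omega> \<in> BH m q" using H_vanish[rule_format, OF True] by blast
    then obtain \<alpha> where "\<alpha> \<in> Hform m (q - 1)" "\<omega> = dH m \<alpha>" by (auto simp: BH_iff)
    then show ?thesis using core[of q \<theta> \<omega> \<alpha>] True x x\<theta> by simp
  next
    case False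
    then have "q < 0 \<or> q > int m + 1" using hq by blast
    then have "\<theta> = zform" "\<omega> = zform"
      using Hform_out[OF \<theta>H] Hform_out[OF \<omega>H] by auto
    then show ?thesis using x\<theta> BE_zero_pair by simp
  qed
qed

lemma part0: "sq_iso (ZE m E Ep 0) (BE m E Ep 0) sc_pair (UNIV :: real set) {0} (*)"
  unfolding sq_iso_def
proof (rule exI[of _ "\<lambda>x. snd x {} (\<lambda>_. 0)"], intro conjI ballI allI)
  fix x y assume "x \<in> ZE m E Ep 0" "y \<in> ZE m E Ep 0"
  show "snd (x + y) {} (\<lambda>_. 0) = snd x {} (\<lambda>_. 0) + snd y {} (\<lambda>_. 0)" by simp
next
  fix c x assume "x \<in> ZE m E Ep 0"
  show "snd (sc_pair c x) {} (\<lambda>_. 0) = c * snd x {} (\<lambda>_. 0)" by (simp add: sc_pair_def sc_form_def)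
next
  show "(\<lambda>x. snd x {} (\<lambda>_. 0)) ` ZE m E Ep 0 \<subseteq> UNIV" by simp
next
  fix r :: real
  define \<omega> :: form where "\<omega> = (\<lambda>J a. if J = {} then r else 0)"
  have \<omega>H: "\<omega> \<in> Hform m 0" unfolding Hform_def \<omega>_def by (auto simp: Alg_const fun_eq_iff)
  have "DtF m E Ep \<omega> = zform"
    unfolding DtF_def \<omega>_def zform_def
    by (intro ext) (simp add: Dt_const[of _ _ _ "if _ = {} then r else 0", simplified])
  moreover have "dH m \<omega> = zform"
    unfolding dH_def \<omega>_def zform_def
    by (intro ext) (simp add: D_const[of _ _ "if _ then r else 0", simplified])
  ultimately have "(zform, \<omega>) \<in> ZE m E Ep 0"
    using \<omega>H by (simp add: ZE_iff zform_Hform dH_zero)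
  moreover have "r - snd (zform, \<omega>) {} (\<lambda>_. 0) \<in> {0}" by (simp add: \<omega>_def)
  ultimately show "\<exists>z\<in>ZE m E Ep 0. r - snd z {} (\<lambda>_. 0) \<in> {0}" by blast
next
  fix z assume z: "z \<in> ZE m E Ep 0"
  obtain \<theta> \<omega> where z\<theta>: "z = (\<theta>, \<omega>)" by (cases z)
  from z z\<theta> have \<theta>H: "\<theta> \<in> Hform m (0 - 1)" and \<omega>H: "\<omega> \<in> Hform m 0"
    and Dt\<omega>: "DtF m E Ep \<omega> = dH m \<theta>" and d\<omega>: "dH m \<omega> = zform"
    by (auto simp: ZE_iff)
  have \<theta>0: "\<theta> = zform" using Hform_out[OF \<theta>H] by simp
  have "\<omega> \<in> ZH m 0" using \<omega>H d\<omega> by (simp add: ZH_iff)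
  then have fT: "depends_only (\<omega> {}) {T}" using H0 by auto
  define f where "f = \<omega> {}"
  have fA: "f \<in> Alg m" using \<omega>H by (simp add: f_def Hform_alg)
  have "DtF m E Ep \<omega> {} = zform {}" using Dt\<omega> \<theta>0 dH_zero by simp
  then have "Dt m E Ep f = (\<lambda>_. 0)" by (simp add: DtF_def zform_def f_def)
  then have pf: "pd T f = (\<lambda>_. 0)" using Dt_T[OF fT[folded f_def]] by simp
  define a0 :: pt where "a0 = (\<lambda>_. 0)"
  have fconst: "f a = f a0" for a
  proof -
    have "((\<lambda>s. f (a0(T := s))) has_real_derivative 0) (at x)" for x
      using smooth_DERIV'[OF Alg_smooth[OF fA], of a0 T x] pf by simp
    then have "f (a0(T := a T)) = f (a0(T := 0))"
      using DERIV_isconst_all[of "\<lambda>s. f (a0(T := s))" "a T" 0] by blast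
    moreover have "\<forall>v\<in>{T}. a v = (a0(T := a T)) v" by simp
    then have "f a = f (a0(T := a T))"
      using fT[folded f_def] unfolding depends_only_def by blast
    moreover have "a0(T := 0) = a0" by (auto simp: a0_def)
    ultimately show ?thesis by simp
  qed
  have \<omega>J: "\<omega> J = (\<lambda>_. 0)" if "J \<noteq> {}" for J
  proof (rule Hform_off[OF \<omega>H])
    show "\<not> (J \<subseteq> {1..m} \<and> int (card J) = 0)"
      using that by (metis card_0_eq finite_atLeastAtMost finite_subset of_nat_eq_0_iff)
  qed
  show "snd z {} (\<lambda>_. 0) \<in> {0} \<longleftrightarrow> z \<in> BE m E Ep 0"
  proof
    assume "snd z {} (\<lambda>_. 0) \<in> {0}"
    then have "f a0 = 0" using z\<theta> by (simp add: f_def a0_def)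
    then have "\<omega> {} = (\<lambda>_. 0)" using fconst unfolding f_def by (intro ext) metis
    then have "\<omega> = zform" using \<omega>J unfolding zform_def by (intro ext) (metis)
    then show "z \<in> BE m E Ep 0" using z\<theta> \<theta>0 BE_zero_pair by simp
  next
    assume "z \<in> BE m E Ep 0"
    then obtain \<alpha> where \<alpha>: "\<alpha> \<in> Hform m (0 - 1)" and "\<omega> = dH m \<alpha>" using z\<theta> by (auto simp: BE_iff)
    moreover have "\<alpha> = zform" using Hform_out[OF \<alpha>] by simp
    ultimately have "\<omega> = zform" by (simp add: dH_zero)
    then show "snd z {} (\<lambda>_. 0) \<in> {0}" using z\<theta> by (simp add: zform_def)
  qed
qed

end


lemma neg1_sq': "(-1::real) ^ n * ((-1) ^ n * x) = x"
  by (simp add: mult.assoc[symmetric] neg1_sq)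

context cpe
begin

lemma snd_into: "snd ` ZE m E Ep q \<subseteq> KerDt m E Ep q"
proof
  fix w assume "w \<in> snd ` ZE m E Ep q"
  then obtain \<theta> \<omega> where z: "(\<theta>, \<omega>) \<in> ZE m E Ep q" and w: "w = \<omega>" by force
  then have "\<theta> \<in> Hform m (q - 1)" "\<omega> \<in> Hform m q" "DtF m E Ep \<omega> = dH m \<theta>" "dH m \<omega> = zform"
    by (auto simp: ZE_iff)
  then show "w \<in> KerDt m E Ep q" unfolding KerDt_def using w by (auto simp: ZH_iff BH_iff)
qed

lemma snd_surj: "\<forall>\<omega>\<in>KerDt m E Ep q. \<exists>z\<in>ZE m E Ep q. \<omega> - snd z \<in> BH m q"
proof
  fix \<omega> assume "\<omega> \<in> KerDt m E Ep q"
  then have \<omega>H: "\<omega> \<in> Hform m q" and d\<omega>: "dH m \<omega> = zform" and "DtF m E Ep \<omega> \<in> BH m q"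
    by (auto simp: KerDt_def ZH_iff)
  then obtain \<theta> where \<theta>: "\<theta> \<in> Hform m (q - 1)" "DtF m E Ep \<omega> = dH m \<theta>" by (auto simp: BH_iff)
  have "(\<theta>, \<omega>) \<in> ZE m E Ep q" using \<theta> \<omega>H d\<omega> by (simp add: ZE_iff)
  moreover have "\<omega> - snd (\<theta>, \<omega>) \<in> BH m q"
  proof -
    have "zform \<in> BH m q" unfolding BH_iff using zform_Hform dH_zero by metis
    then show ?thesis by (simp add: zero_form)
  qed
  ultimately show "\<exists>z\<in>ZE m E Ep q. \<omega> - snd z \<in> BH m q" by blast
qed

lemma part_m1: "sq_iso (ZE m E Ep (int m - 1)) (BE m E Ep (int m - 1)) sc_pair
             (KerDt m E Ep (int m - 1)) (BH m (int m - 1)) sc_form"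
  unfolding sq_iso_def
proof (rule exI[of _ snd], intro conjI ballI allI snd_into)
  fix x y show "snd (x + y) = snd x + snd y" by simp
next
  fix c x show "snd (sc_pair c x) = sc_form c (snd x)" by (simp add: sc_pair_def)
next
  fix z assume z: "z \<in> ZE m E Ep (int m - 1)"
  obtain \<theta> \<omega> where z\<theta>: "z = (\<theta>, \<omega>)" by (cases z)
  show "snd z \<in> BH m (int m - 1) \<longleftrightarrow> z \<in> BE m E Ep (int m - 1)"
  proof
    assume "snd z \<in> BH m (int m - 1)"
    then obtain \<alpha> where "\<alpha> \<in> Hform m (int m - 1 - 1)" "\<omega> = dH m \<alpha>" using z\<theta> by (auto simp: BH_iff)
    then show "z \<in> BE m E Ep (int m - 1)"
      using core[of "int m - 1" \<theta> \<omega> \<alpha>] z z\<theta> m2 by simp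
  next
    assume "z \<in> BE m E Ep (int m - 1)"
    then show "snd z \<in> BH m (int m - 1)" by (auto simp: BE_iff BH_iff)
  qed
qed (use snd_surj in blast)

lemma part_m: "sq_iso (ZE m E Ep (int m))
             {b + (sc_form ((-1) ^ (m - 1)) \<omega>, zform) | b \<omega>.
                 b \<in> BE m E Ep (int m) \<and> \<omega> \<in> ZH m (int m - 1)} sc_pair
             (KerDt m E Ep (int m)) (BH m (int m)) sc_form"
  unfolding sq_iso_def
proof (rule exI[of _ snd], intro conjI ballI allI snd_into)
  fix x y show "snd (x + y) = snd x + snd y" by simp
next
  fix c x show "snd (sc_pair c x) = sc_form c (snd x)" by (simp add: sc_pair_def)
next
  fix z assume z: "z \<in> ZE m E Ep (int m)"
  obtain \<theta> \<omega> where z\<theta>: "z = (\<theta>, \<omega>)" by (cases z)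
  define c :: real where "c = (-1) ^ (m - 1)"
  show "snd z \<in> BH m (int m) \<longleftrightarrow> z \<in> {b + (sc_form ((-1) ^ (m - 1)) \<omega>, zform) | b \<omega>.
                 b \<in> BE m E Ep (int m) \<and> \<omega> \<in> ZH m (int m - 1)}"
  proof
    assume "snd z \<in> BH m (int m)"
    then obtain \<alpha> where \<alpha>: "\<alpha> \<in> Hform m (int m - 1)" and \<omega>\<alpha>: "\<omega> = dH m \<alpha>" using z\<theta> by (auto simp: BH_iff)
    define \<eta> where "\<eta> = (\<lambda>J a. \<theta> J a - DtF m E Ep \<alpha> J a)"
    have \<eta>Z: "\<eta> \<in> ZH m (int m - 1)"
      unfolding \<eta>_def using eta_closed[of \<theta> \<omega> "int m" \<alpha>] z z\<theta> \<alpha> \<omega>\<alpha> by simp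
    then have \<eta>A: "\<forall>J. \<eta> J \<in> Alg m" using Hform_alg unfolding ZH_iff by blast
    have w'Z: "sc_form c \<eta> \<in> ZH m (int m - 1)"
      using \<eta>Z by (simp add: ZH_iff Hform_sc dH_sc[OF \<eta>A]) (simp add: sc_form_def zform_def)
    define b where "b = ((\<lambda>J a. DtF m E Ep \<alpha> J a - dH m zform J a), dH m \<alpha>)"
    have bB: "b \<in> BE m E Ep (int m)"
      unfolding BE_iff b_def using \<alpha> zform_Hform by blast
    have "z = b + (sc_form c (sc_form c \<eta>), zform)"
      using z\<theta> \<omega>\<alpha> by (simp add: b_def prod_eq_iff fun_eq_iff sc_form_def dH_zero neg1_sq' c_def \<eta>_def)
         (simp add: zform_def)
    then show "z \<in> {b + (sc_form ((-1) ^ (m - 1)) \<omega>, zform) | b \<omega>.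
                 b \<in> BE m E Ep (int m) \<and> \<omega> \<in> ZH m (int m - 1)}"
      using bB w'Z unfolding c_def by blast
  next
    assume "z \<in> {b + (sc_form ((-1) ^ (m - 1)) \<omega>, zform) | b \<omega>.
                 b \<in> BE m E Ep (int m) \<and> \<omega> \<in> ZH m (int m - 1)}"
    then obtain b w where zb: "z = b + (sc_form ((-1) ^ (m - 1)) w, zform)" and b: "b \<in> BE m E Ep (int m)" by blast
    from b obtain \<alpha> where \<alpha>: "\<alpha> \<in> Hform m (int m - 1)" and "snd b = dH m \<alpha>" by (auto simp: BE_iff)
    then have "snd z = dH m \<alpha>" using zb by (simp add: zero_form[symmetric])
    then show "snd z \<in> BH m (int m)" using \<alpha> by (auto simp: BH_iff)
  qed
qed (use snd_surj in blast)

lemma part_mp1: "sq_iso (ZE m E Ep (int m + 1)) (BE m E Ep (int m + 1)) sc_pair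
             (ZH m (int m)) {\<eta> + DtF m E Ep \<omega> | \<eta> \<omega>. \<eta> \<in> BH m (int m) \<and> \<omega> \<in> ZH m (int m)} sc_form"
  unfolding sq_iso_def
proof (rule exI[of _ fst], intro conjI ballI allI subsetI)
  fix x y show "fst (x + y) = fst x + fst y" by simp
next
  fix c x show "fst (sc_pair c x) = sc_form c (fst x)" by (simp add: sc_pair_def)
next
  fix w assume "w \<in> fst ` ZE m E Ep (int m + 1)"
  then obtain \<theta> \<omega> where z: "(\<theta>, \<omega>) \<in> ZE m E Ep (int m + 1)" and w: "w = \<theta>" by force
  then have "\<theta> \<in> Hform m (int m)" by (simp add: ZE_iff)
  then show "w \<in> ZH m (int m)" using w dH_top by (simp add: ZH_iff)
next
  fix \<theta> assume \<theta>: "\<theta> \<in> ZH m (int m)"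
  then have "(\<theta>, zform) \<in> ZE m E Ep (int m + 1)"
    by (simp add: ZE_iff ZH_iff zform_Hform DtF_zform dH_zero)
  moreover have "\<theta> - fst (\<theta>, zform) \<in> {\<eta> + DtF m E Ep \<omega> | \<eta> \<omega>. \<eta> \<in> BH m (int m) \<and> \<omega> \<in> ZH m (int m)}"
  proof -
    have "zform \<in> BH m (int m)" unfolding BH_iff using zform_Hform dH_zero by metis
    moreover have "zform \<in> ZH m (int m)" by (simp add: ZH_iff zform_Hform dH_zero)
    moreover have "zform + DtF m E Ep zform = 0" unfolding DtF_zform by (simp add: zform_def fun_eq_iff)
    then have "\<theta> - fst (\<theta>, zform) = zform + DtF m E Ep zform" by simp
    ultimately show ?thesis by blast
  qed
  ultimately show "\<exists>z\<in>ZE m E Ep (int m + 1). \<theta> - fst z \<in> {\<eta> + DtF m E Ep \<omega> | \<eta> \<omega>. \<eta> \<in> BH m (int m) \<and> \<omega> \<in> ZH m (int m)}"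
    by blast
next
  fix z assume z: "z \<in> ZE m E Ep (int m + 1)"
  obtain \<theta> \<omega> where z\<theta>: "z = (\<theta>, \<omega>)" by (cases z)
  from z z\<theta> have \<omega>H: "\<omega> \<in> Hform m (int m + 1)" by (simp add: ZE_iff)
  have \<omega>0: "\<omega> = zform" using Hform_out[OF \<omega>H] by simp
  show "fst z \<in> {\<eta> + DtF m E Ep \<omega> | \<eta> \<omega>. \<eta> \<in> BH m (int m) \<and> \<omega> \<in> ZH m (int m)} \<longleftrightarrow> z \<in> BE m E Ep (int m + 1)"
  proof
    assume "fst z \<in> {\<eta> + DtF m E Ep \<omega> | \<eta> \<omega>. \<eta> \<in> BH m (int m) \<and> \<omega> \<in> ZH m (int m)}"
    then obtain \<eta> \<alpha> where \<theta>e: "\<theta> = \<eta> + DtF m E Ep \<alpha>" and \<eta>: "\<eta> \<in> BH m (int m)" and \<alpha>: "\<alpha> \<in> ZH m (int m)"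
      using z\<theta> by auto
    from \<eta> obtain \<beta> where \<beta>: "\<beta> \<in> Hform m (int m - 1)" and \<eta>\<beta>: "\<eta> = dH m \<beta>" by (auto simp: BH_iff)
    have \<beta>A: "\<forall>J. \<beta> J \<in> Alg m" using \<beta> by (simp add: Hform_alg)
    have nb: "(\<lambda>J a. - \<beta> J a) \<in> Hform m (int m + 1 - 2)" using Hform_uminus[OF \<beta>] by simp
    have \<alpha>H: "\<alpha> \<in> Hform m (int m + 1 - 1)" and d\<alpha>: "dH m \<alpha> = zform" using \<alpha> by (auto simp: ZH_iff)
    have "z = ((\<lambda>J a. DtF m E Ep \<alpha> J a - dH m (\<lambda>J a. - \<beta> J a) J a), dH m \<alpha>)"
      using z\<theta> \<omega>0 \<theta>e \<eta>\<beta> d\<alpha> by (simp add: dH_uminus[OF \<beta>A] fun_eq_iff)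
    then show "z \<in> BE m E Ep (int m + 1)" unfolding BE_iff using nb \<alpha>H by blast
  next
    assume "z \<in> BE m E Ep (int m + 1)"
    then obtain \<beta> \<alpha> where \<beta>: "\<beta> \<in> Hform m (int m + 1 - 2)" and \<alpha>: "\<alpha> \<in> Hform m (int m + 1 - 1)"
      and ze: "z = ((\<lambda>J a. DtF m E Ep \<alpha> J a - dH m \<beta> J a), dH m \<alpha>)" by (auto simp: BE_iff)
    have \<beta>A: "\<forall>J. \<beta> J \<in> Alg m" using \<beta> by (simp add: Hform_alg)
    have nb: "(\<lambda>J a. - \<beta> J a) \<in> Hform m (int m - 1)" using Hform_uminus[OF \<beta>] by simp
    have "dH m (\<lambda>J a. - \<beta> J a) \<in> BH m (int m)" using nb by (auto simp: BH_iff)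
    moreover have "\<alpha> \<in> ZH m (int m)" using \<alpha> dH_top by (simp add: ZH_iff)
    moreover have "fst z = dH m (\<lambda>J a. - \<beta> J a) + DtF m E Ep \<alpha>"
      using ze by (simp add: dH_uminus[OF \<beta>A] fun_eq_iff)
    ultimately show "fst z \<in> {\<eta> + DtF m E Ep \<omega> | \<eta> \<omega>. \<eta> \<in> BH m (int m) \<and> \<omega> \<in> ZH m (int m)}"
      by blast
  qed
qed

end


theorem mainTheorem7:
  fixes m :: nat and E :: "nat \<Rightarrow> fn" and Ep :: fn
  assumes m2: "m \<ge> 2"
    and E_alg: "\<forall>\<mu>\<in>{1..m}. E \<mu> \<in> Alg m" and Ep_alg: "Ep \<in> Alg m"
    and div_free: "(\<lambda>a. \<Sum>\<mu>\<in>{1..m}. D m \<mu> (E \<mu>) a) = (\<lambda>a. 0)"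
    and pressure: "(\<lambda>a. Lap m Ep a
        + 2 * (\<Sum>l\<in>{1..m}. \<Sum>\<mu>\<in>{1..m}. uval m l \<mu> a * D m l (E \<mu>) a)) = (\<lambda>a. 0)"
    and ev_comm: "\<forall>f\<in>Alg m. \<forall>\<mu>\<in>{1..m}. ev m E Ep (D m \<mu> f) = D m \<mu> (ev m E Ep f)"
    and H_vanish: "\<forall>q. 1 \<le> q \<and> q \<le> int m - 2 \<longrightarrow> ZH m q \<subseteq> BH m q"
    and H0: "ZH m 0 = {\<omega> \<in> Hform m 0. depends_only (\<omega> {}) {T}}"
  shows "(\<forall>q. (q < 0 \<or> (1 \<le> q \<and> q \<le> int m - 2) \<or> q > int m + 1)
            \<longrightarrow> ZE m E Ep q \<subseteq> BE m E Ep q)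
    \<and> sq_iso (ZE m E Ep 0) (BE m E Ep 0) sc_pair (UNIV :: real set) {0} (*)
    \<and> sq_iso (ZE m E Ep (int m - 1)) (BE m E Ep (int m - 1)) sc_pair
             (KerDt m E Ep (int m - 1)) (BH m (int m - 1)) sc_form
    \<and> sq_iso (ZE m E Ep (int m))
             {b + (sc_form ((-1) ^ (m - 1)) \<omega>, zform) | b \<omega>.
                 b \<in> BE m E Ep (int m) \<and> \<omega> \<in> ZH m (int m - 1)} sc_pair
             (KerDt m E Ep (int m)) (BH m (int m)) sc_form
    \<and> sq_iso (ZE m E Ep (int m + 1)) (BE m E Ep (int m + 1)) sc_pair
             (ZH m (int m)) {\<eta> + DtF m E Ep \<omega> | \<eta> \<omega>. \<eta> \<in> BH m (int m) \<and> \<omega> \<in> ZH m (int m)} sc_form"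
proof -
  interpret cpe m E Ep
    by unfold_locales (use m2 E_alg Ep_alg ev_comm H_vanish H0 in auto)
  show ?thesis
    by (intro conjI part_vanish part0 part_m1 part_m part_mp1)
qed

end
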